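(* Each of the points $p_+$, $p_-$ is a pairwise transversal self-intersection for every curve $\overline{\Xi^{\pm}_l}$, and one has $\operatorname{mult}_{p_\pm}(\overline{\Xi_l^\pm}) = \left[\frac{l}{2}\right]$; $\operatorname{mult}_{p_\pm}(\overline{\Xi_l^\mp}) = l-\left[\frac{l}{2}\right]$. Moreover, all the local branches of the curve $\overline{\Xi^+_l}\cup\overline{\Xi^-_l}$ at $p_{\pm}$ are transversal to the infinity line $\{\theta=0\}$.
   Context: Let $l\in\mathbb N$ and let $\mathcal{G}_l$ be the $l\times l$-matrix whose entries on the antidiagonal are $(\mathcal{G}_l)_{i,l+1-i}=\mu$ for $i=1,\dots,l$, whose entries just below the antidiagonal are $(\mathcal{G}_l)_{i,l+2-i}=-(l+1-i)$ for $i=2,\dots,l$ (so $(\mathcal{G}_l)_{2,l}=-(l-1)$, $(\mathcal{G}_l)_{l,2}=-1$), and all other entries are zero. Let $\Xi_l^\pm=\{\det(\mathcal{G}_l\pm r\operatorname{Id})=0\}\subset\mathbb C^2_{(\mu,r)}$, and let $\overline{\Xi_l^\pm}$ denote their projective closures in $\mathbb{P}^2_{(\mu:r:\theta)}$ (the affine plane being the chart $\theta=1$; $\{\theta=0\}$ is the infinity line). Let $p_\pm=(1:\pm1:0)$. For a point $P$ on a curve $C$, $\operatorname{mult}_P(C)$ denotes the multiplicity of $P$ on $C$, i.e. its intersection index at $P$ with a generic line through $P$. A point $P$ is called a pairwise transversal self-intersection if it is the intersection of $k$ pairwise transversal smooth local branches (then its multiplicity is $k$); a regular point, corresponding to one branch,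 is also treated as a pairwise transversal self-intersection. Here $[x]$ is the integer part. *)

theory Defs
  imports "HOL-Analysis.Analysis" "Jordan_Normal_Form.Determinant"
begin

text \<open>The l x l matrix G_l(mu) (0-based indices i,j < l): the antidiagonal
  (1-based (i, l+1-i)) carries mu, the entries just below it (1-based (i, l+2-i),
  i = 2..l) carry -(l+1-i); all others are 0.\<close>
definition G_mat :: "nat \<Rightarrow> complex \<Rightarrow> complex Matrix.mat" where
  "G_mat l \<mu> = Matrix.mat l l (\<lambda>(i, j).
      if i + j + 1 = l then \<mu>
      else if i + j = l then - of_nat (l - i)
      else 0)"

text \<open>The polynomial det(G_l + s r Id) as a function of (mu, r); s = 1 gives Xi^+, s = -1 gives Xi^-.\<close>
definition Xi_poly :: "nat \<Rightarrow> complex \<Rightarrow> complex \<Rightarrow> complex \<Rightarrow> complex" where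
  "Xi_poly l s \<mu> r = Determinant.det (G_mat l \<mu> + Matrix.smult_mat (s * r) (1\<^sub>m l))"

definition Xi :: "nat \<Rightarrow> complex \<Rightarrow> (complex \<times> complex) set" where
  "Xi l s = {(\<mu>, r). Xi_poly l s \<mu> r = 0}"

text \<open>The projective closure of Xi_l^s in P^2 = {(mu:r:theta)}, read in the affine chart
  mu = 1 with coordinates (r, theta): a point (mu:r:theta) with mu \<noteq> 0 corresponds to
  (r/mu, theta/mu), and the affine point (mu, r) (theta = 1, mu \<noteq> 0) to (r/mu, 1/mu).
  Since the chart is open in P^2, the part of the (analytic = Zariski) closure
  lying in the chart is the closure, in C^2, of the image of the affine curve.\<close>
definition Xi_closure_chart :: "nat \<Rightarrow> complex \<Rightarrow> (complex \<times> complex) set" where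
  "Xi_closure_chart l s = closure ((\<lambda>(\<mu>, r). (r / \<mu>, 1 / \<mu>)) ` (Xi l s \<inter> {(\<mu>, r). \<mu> \<noteq> 0}))"

text \<open>A curve C (given in local coordinates (r, theta) of the chart mu = 1) has at the point
  (r0, 0) on the infinity line theta = 0 exactly k local branches, each smooth, pairwise
  transversal, and transversal to the infinity line theta = 0: near the point, C is the union
  of k graphs r = phi_j(theta) of holomorphic functions with phi_j(0) = r0 and pairwise distinct
  tangent slopes phi_j'(0). (A graph over the theta-axis is exactly a smooth branch transversal
  to theta = 0.) For k = 0 this says the point does not lie on C.\<close>
definition transversal_branches_at_infinity ::
    "(complex \<times> complex) set \<Rightarrow> complex \<Rightarrow> nat \<Rightarrow> bool" where
  "transversal_branches_at_infinity C r0 k \<longleftrightarrow>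
     (\<exists>U \<delta> (\<phi> :: nat \<Rightarrow> complex \<Rightarrow> complex).
        open U \<and> (r0, 0) \<in> U \<and> \<delta> > 0 \<and>
        (\<forall>j<k. \<phi> j holomorphic_on ball 0 \<delta> \<and> \<phi> j 0 = r0) \<and>
        (\<forall>i<k. \<forall>j<k. i \<noteq> j \<longrightarrow> deriv (\<phi> i) 0 \<noteq> deriv (\<phi> j) 0) \<and>
        C \<inter> U = {(\<phi> j t, t) | j t. j < k \<and> t \<in> ball 0 \<delta>})"

end

theory Submission
  imports Defs "Jordan_Normal_Form.Char_Poly"
begin


definition ev2 :: "complex poly poly \<Rightarrow> complex \<Rightarrow> complex \<Rightarrow> complex" where
  "ev2 q a T = poly (map_poly (\<lambda>c. poly c T) q) a"

lemma poly_sum_bound: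
  fixes p :: "complex poly"
  assumes "degree p \<le> N" shows "poly p x = (\<Sum>i\<le>N. coeff p i * x^i)"
proof -
  have "poly p x = (\<Sum>i\<le>degree p. coeff p i * x^i)" by (simp add: poly_altdef)
  also have "\<dots> = (\<Sum>i\<le>N. coeff p i * x^i)"
    by (rule sum.mono_neutral_left) (use assms in \<open>auto simp: coeff_eq_0\<close>)
  finally show ?thesis .
qed

lemma ev2_sum: "ev2 q a T = (\<Sum>i\<le>degree q. poly (coeff q i) T * a^i)"
  unfolding ev2_def
  by (subst poly_sum_bound[of _ "degree q"]) (auto simp: degree_map_poly_le coeff_map_poly)

definition K1 :: "complex poly poly \<Rightarrow> complex \<Rightarrow> complex \<Rightarrow> complex \<Rightarrow> complex" where
  "K1 q a b T = (\<Sum>i\<le>degree q. poly (coeff q i) T * (\<Sum>p<i. b^(i - Suc p) * a^p))"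

lemma pow_term: "(c::complex) * a ^ i - c * b ^ i = (a - b) * (c * (\<Sum>p<i. b ^ (i - Suc p) * a ^ p))"
proof -
  have "a^i - b^i = (a - b) * (\<Sum>p<i. b^(i - Suc p) * a^p)" by (rule power_diff_sumr2)
  then show ?thesis by (metis mult.left_commute right_diff_distrib)
qed

lemma K1_eq: "ev2 q a T - ev2 q b T = (a - b) * K1 q a b T"
  unfolding ev2_sum K1_def sum_subtractf[symmetric]
  by (subst sum_distrib_left) (intro sum.cong refl pow_term)

definition DD :: "complex poly \<Rightarrow> complex \<Rightarrow> complex \<Rightarrow> complex" where
  "DD c T T0 = (\<Sum>j\<le>degree c. coeff c j * (\<Sum>p<j. T0^(j - Suc p) * T^p))"

lemma DD_eq: "poly c T - poly c T0 = (T - T0) * DD c T T0"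
  unfolding poly_altdef DD_def sum_subtractf[symmetric]
  by (subst sum_distrib_left) (intro sum.cong refl pow_term)

definition K2 :: "complex poly poly \<Rightarrow> complex \<Rightarrow> complex \<Rightarrow> complex \<Rightarrow> complex" where
  "K2 q a T T0 = (\<Sum>i\<le>degree q. DD (coeff q i) T T0 * a^i)"

lemma K2_eq: "ev2 q a T - ev2 q a T0 = (T - T0) * K2 q a T T0"
  unfolding ev2_sum K2_def sum_subtractf[symmetric] sum_distrib_left
proof (intro sum.cong refl)
  fix i show "poly (coeff q i) T * a ^ i - poly (coeff q i) T0 * a ^ i = (T - T0) * (DD (coeff q i) T T0 * a ^ i)"
    using DD_eq[of "coeff q i" T T0] by (metis left_diff_distrib mult.assoc)
qed

lemma K1_tendsto:
  "(f \<longlongrightarrow> a) F \<Longrightarrow> (g \<longlongrightarrow> b) F \<Longrightarrow> (h \<longlongrightarrow> T) F \<Longrightarrow>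
   ((\<lambda>x. K1 q (f x) (g x) (h x)) \<longlongrightarrow> K1 q a b T) F"
  unfolding K1_def by (intro tendsto_intros)

lemma DD_tendsto:
  "(g \<longlongrightarrow> b) F \<Longrightarrow> (h \<longlongrightarrow> T) F \<Longrightarrow>
   ((\<lambda>x. DD c (g x) (h x)) \<longlongrightarrow> DD c b T) F"
  unfolding DD_def by (intro tendsto_intros)

lemma K2_tendsto:
  "(f \<longlongrightarrow> a) F \<Longrightarrow> (g \<longlongrightarrow> b) F \<Longrightarrow> (h \<longlongrightarrow> T) F \<Longrightarrow>
   ((\<lambda>x. K2 q (f x) (g x) (h x)) \<longlongrightarrow> K2 q a b T) F"
  unfolding K2_def by (intro tendsto_intros DD_tendsto)

lemma ev2_tendsto:
  "(f \<longlongrightarrow> a) F \<Longrightarrow> (h \<longlongrightarrow> T) F \<Longrightarrow>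
   ((\<lambda>x. ev2 q (f x) (h x)) \<longlongrightarrow> ev2 q a T) F"
  unfolding ev2_sum by (intro tendsto_intros)

lemma dist3_le: "dist (a::complex, b::complex, c::complex) (x, y, z) \<le> dist a x + dist b y + dist c z"
proof -
  have "dist (a, b, c) (x, y, z) \<le> dist a x + dist (b,c) (y,z)"
    using real_sqrt_sum_squares_triangle_ineq[of "dist a x" 0 0 "dist (b,c) (y,z)"]
    by (simp add: dist_Pair_Pair[of a "(b,c)"])
  also have "dist (b,c) (y,z) \<le> dist b y + dist c z"
    using real_sqrt_sum_squares_triangle_ineq[of "dist b y" 0 0 "dist c z"]
    by (simp add: dist_Pair_Pair[of b c])
  finally show ?thesis by simp
qed


lemma poly2_ift:
  fixes q :: "complex poly poly" and a0 :: complex and eps :: real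
  assumes z: "ev2 q a0 0 = 0" and nz: "K1 q a0 a0 0 \<noteq> 0" and eps: "eps > 0"
  obtains \<delta> \<alpha> where "\<delta> > 0" "\<alpha> holomorphic_on ball 0 \<delta>" "\<alpha> 0 = a0"
    "\<And>T. T \<in> ball 0 \<delta> \<Longrightarrow> ev2 q (\<alpha> T) T = 0"
    "\<And>T. T \<in> ball 0 \<delta> \<Longrightarrow> \<alpha> T \<in> cball a0 eps"
proof -
  define d where "d = K1 q a0 a0 0"
  have dnz: "d \<noteq> 0" using nz d_def by simp
  have nd: "norm d > 0" using dnz by simp
  let ?K = "\<lambda>x::complex\<times>complex\<times>complex. K1 q (fst x) (fst (snd x)) (snd (snd x))"
  have "isCont ?K (a0,a0,0)"
  proof -
    have t: "((\<lambda>x. x) \<longlongrightarrow> (a0,a0,0::complex)) (at (a0,a0,0))" by (rule tendsto_ident_at)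
    have t1: "((\<lambda>x. fst x) \<longlongrightarrow> a0) (at (a0,a0,0::complex))" using tendsto_fst[OF t] by simp
    have t2: "((\<lambda>x. fst (snd x)) \<longlongrightarrow> a0) (at (a0,a0,0::complex))" using tendsto_fst[OF tendsto_snd[OF t]] by simp
    have t3: "((\<lambda>x. snd (snd x)) \<longlongrightarrow> 0) (at (a0,a0,0::complex))" using tendsto_snd[OF tendsto_snd[OF t]] by simp
    show ?thesis unfolding isCont_def using K1_tendsto[OF t1 t2 t3] by simp
  qed
  then obtain r0 where r0: "r0 > 0" "\<And>x. dist x (a0,a0,0) < r0 \<Longrightarrow> dist (?K x) (?K (a0,a0,0)) < norm d / 2"
    unfolding continuous_at_eps_delta using nd by (metis half_gt_zero)
  define r where "r = min (r0/4) eps"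
  have r: "r > 0" "r \<le> eps" using r0 eps by (auto simp: r_def)
  have Kb: "norm (K1 q a b T - d) \<le> norm d / 2"
    if "dist a a0 \<le> r" "dist b a0 \<le> r" "norm T \<le> r" for a b T
  proof -
    have "dist (a,b,T) (a0,a0,0) \<le> dist a a0 + dist b a0 + dist T 0" by (rule dist3_le)
    also have "\<dots> < r0" using that r0 by (simp add: r_def)
    finally have "dist (?K (a,b,T)) (?K (a0,a0,0)) < norm d / 2" using r0(2) by blast
    then show ?thesis by (simp add: d_def dist_norm)
  qed
  have "isCont (\<lambda>T. ev2 q a0 T) 0"
    unfolding isCont_def by (rule ev2_tendsto) (auto intro!: tendsto_intros)
  moreover have "norm d * r / 2 > 0" using nd r by simp
  ultimately obtain \<delta>0 where d0: "\<delta>0 > 0" "\<And>T. dist T 0 < \<delta>0 \<Longrightarrow> dist (ev2 q a0 T) (ev2 q a0 0) < norm d * r / 2"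
    unfolding continuous_at_eps_delta by metis
  define \<delta> where "\<delta> = min \<delta>0 r"
  have dl: "\<delta> > 0" using d0 r by (simp add: \<delta>_def)
  define \<Phi> where "\<Phi> T a = a - ev2 q a T / d" for T a
  have Phi_diff: "\<Phi> T a - \<Phi> T b = (a - b) * (d - K1 q a b T) / d" for T a b
  proof -
    have "\<Phi> T a - \<Phi> T b = (a - b) - (ev2 q a T - ev2 q b T) / d"
      unfolding \<Phi>_def by (simp add: diff_divide_distrib)
    also have "\<dots> = (a - b) - (a - b) * K1 q a b T / d" by (simp add: K1_eq)
    also have "\<dots> = (a - b) * (d - K1 q a b T) / d" using dnz by (simp add: field_simps)
    finally show ?thesis .
  qed
  have lip: "dist (\<Phi> T a) (\<Phi> T b) \<le> 1/2 * dist a b"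
    if "T \<in> ball 0 \<delta>" "a \<in> cball a0 r" "b \<in> cball a0 r" for T a b
  proof -
    have nT: "norm T \<le> r" using that(1) by (simp add: \<delta>_def)
    have k: "norm (d - K1 q a b T) \<le> norm d / 2"
      using Kb[of a b T] that nT by (simp add: dist_commute norm_minus_commute)
    have "dist (\<Phi> T a) (\<Phi> T b) = norm (a - b) * norm (d - K1 q a b T) / norm d"
      by (simp add: dist_norm Phi_diff norm_mult norm_divide)
    also have "\<dots> \<le> norm (a - b) * (norm d / 2) / norm d"
      by (intro divide_right_mono mult_left_mono k) auto
    also have "\<dots> = 1/2 * dist a b" using nd by (simp add: dist_norm)
    finally show ?thesis .
  qed
  have maps: "\<Phi> T ` cball a0 r \<subseteq> cball a0 r" if "T \<in> ball 0 \<delta>" for T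
  proof
    fix y assume "y \<in> \<Phi> T ` cball a0 r"
    then obtain a where a: "a \<in> cball a0 r" "y = \<Phi> T a" by auto
    have "norm T < \<delta>0" using that by (simp add: \<delta>_def)
    then have e0: "norm (ev2 q a0 T) < norm d * r / 2" using d0(2)[of T] z by (simp add: dist_norm)
    have "dist (\<Phi> T a0) a0 = norm (ev2 q a0 T) / norm d" by (simp add: \<Phi>_def dist_norm norm_divide)
    also have "\<dots> \<le> r / 2" using e0 nd by (simp add: divide_le_eq mult.commute)
    finally have 1: "dist (\<Phi> T a0) a0 \<le> r / 2" .
    have 2: "dist (\<Phi> T a) (\<Phi> T a0) \<le> 1/2 * dist a a0" using lip[OF that a(1)] r by simp
    have "dist a a0 \<le> r" using a(1) by (simp add: dist_commute)
    then have "dist (\<Phi> T a) a0 \<le> r" using 1 2 dist_triangle[of "\<Phi> T a" a0 "\<Phi> T a0"] by linarith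
    then have "dist y a0 \<le> r" using a(2) by simp
    then show "y \<in> cball a0 r" by (simp add: dist_commute)
  qed
  have ex: "\<exists>!a\<in>cball a0 r. \<Phi> T a = a" if "T \<in> ball 0 \<delta>" for T
    by (rule Banach_fix[where c="1/2"]) (use that maps lip r in \<open>auto simp: complete_eq_closed\<close>)
  define \<alpha> where "\<alpha> T = (THE a. a \<in> cball a0 r \<and> \<Phi> T a = a)" for T
  have aP: "\<alpha> T \<in> cball a0 r \<and> \<Phi> T (\<alpha> T) = \<alpha> T" if "T \<in> ball 0 \<delta>" for T
    unfolding \<alpha>_def by (rule theI') (use ex[OF that] in blast)
  have fix_iff: "\<Phi> T a = a \<longleftrightarrow> ev2 q a T = 0" for T a
    using dnz by (auto simp: \<Phi>_def)
  have zero: "ev2 q (\<alpha> T) T = 0" if "T \<in> ball 0 \<delta>" for T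
    using aP[OF that] fix_iff by blast
  have a00: "\<alpha> 0 = a0"
  proof -
    have "0 \<in> ball (0::complex) \<delta>" using dl by simp
    moreover have "a0 \<in> cball a0 r" "\<Phi> 0 a0 = a0" using r z fix_iff by auto
    ultimately show ?thesis using ex aP by blast
  qed
  have cont: "(\<alpha> \<longlongrightarrow> \<alpha> T0) (at T0)" if T0: "T0 \<in> ball 0 \<delta>" for T0
  proof -
    have bnd: "norm (\<alpha> T - \<alpha> T0) \<le> 2 * norm (ev2 q (\<alpha> T0) T) / norm d" if T: "T \<in> ball 0 \<delta>" for T
    proof -
      have "\<alpha> T - \<alpha> T0 = (\<Phi> T (\<alpha> T) - \<Phi> T (\<alpha> T0)) + (\<Phi> T (\<alpha> T0) - \<alpha> T0)"
        using aP[OF T] by simp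
      also have "\<Phi> T (\<alpha> T0) - \<alpha> T0 = - (ev2 q (\<alpha> T0) T / d)" by (simp add: \<Phi>_def)
      finally have "norm (\<alpha> T - \<alpha> T0) \<le> norm (\<Phi> T (\<alpha> T) - \<Phi> T (\<alpha> T0)) + norm (ev2 q (\<alpha> T0) T) / norm d"
        by (metis norm_divide norm_minus_cancel norm_triangle_ineq)
      moreover have "norm (\<Phi> T (\<alpha> T) - \<Phi> T (\<alpha> T0)) \<le> 1/2 * norm (\<alpha> T - \<alpha> T0)"
      proof -
        have "dist (\<Phi> T (\<alpha> T)) (\<Phi> T (\<alpha> T0)) \<le> 1/2 * dist (\<alpha> T) (\<alpha> T0)"
          using lip[OF T] aP[OF T] aP[OF T0] by blast
        then show ?thesis by (simp add: dist_norm)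
      qed
      ultimately show ?thesis by (simp add: field_simps)
    qed
    have ev: "\<forall>\<^sub>F T in at T0. T \<in> ball 0 \<delta>"
      using eventually_at_in_open'[OF open_ball T0] .
    have lim0: "((\<lambda>T. 2 * norm (ev2 q (\<alpha> T0) T) / norm d) \<longlongrightarrow> 2 * norm (ev2 q (\<alpha> T0) T0) / norm d) (at T0)"
      by (intro tendsto_intros ev2_tendsto) (use dnz in auto)
    have "((\<lambda>T. \<alpha> T - \<alpha> T0) \<longlongrightarrow> 0) (at T0)"
    proof (rule Lim_null_comparison[OF eventually_mono[OF ev bnd]])
      show "((\<lambda>T. 2 * norm (ev2 q (\<alpha> T0) T) / norm d) \<longlongrightarrow> 0) (at T0)"
        using zero[OF T0] lim0 by simp
    qed
    then show ?thesis by (simp add: LIM_zero_iff)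
  qed
  have deriv: "(\<alpha> has_field_derivative (- K2 q (\<alpha> T0) T0 T0 / K1 q (\<alpha> T0) (\<alpha> T0) T0)) (at T0)"
    if T0: "T0 \<in> ball 0 \<delta>" for T0
  proof -
    have K1nz: "K1 q a b T \<noteq> 0" if "a \<in> cball a0 r" "b \<in> cball a0 r" "T \<in> ball 0 \<delta>" for a b T
    proof
      assume "K1 q a b T = 0"
      moreover have "norm T \<le> r" using that(3) by (simp add: \<delta>_def)
      ultimately have "norm d \<le> norm d / 2" using Kb[of a b T] that by (simp add: dist_commute)
      then show False using nd by simp
    qed
    have ev: "\<forall>\<^sub>F T in at T0. T \<in> ball 0 \<delta>"
      using eventually_at_in_open'[OF open_ball T0] .
    have eq: "(\<alpha> T - \<alpha> T0) / (T - T0) = - K2 q (\<alpha> T0) T T0 / K1 q (\<alpha> T) (\<alpha> T0) T"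
      if T: "T \<in> ball 0 \<delta>" "T \<noteq> T0" for T
    proof -
      have "0 = ev2 q (\<alpha> T) T - ev2 q (\<alpha> T0) T0" using zero T zero T0 by simp
      also have "\<dots> = (ev2 q (\<alpha> T) T - ev2 q (\<alpha> T0) T) + (ev2 q (\<alpha> T0) T - ev2 q (\<alpha> T0) T0)" by simp
      also have "\<dots> = (\<alpha> T - \<alpha> T0) * K1 q (\<alpha> T) (\<alpha> T0) T + (T - T0) * K2 q (\<alpha> T0) T T0"
        by (simp add: K1_eq K2_eq)
      finally have "(\<alpha> T - \<alpha> T0) * K1 q (\<alpha> T) (\<alpha> T0) T = - ((T - T0) * K2 q (\<alpha> T0) T T0)"
        by (simp add: eq_neg_iff_add_eq_0 add.commute)
      moreover have "K1 q (\<alpha> T) (\<alpha> T0) T \<noteq> 0" using K1nz aP T T0 by blast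
      moreover have "T - T0 \<noteq> 0" using T by simp
      ultimately show ?thesis by (simp add: field_simps)
    qed
    have "((\<lambda>T. - K2 q (\<alpha> T0) T T0 / K1 q (\<alpha> T) (\<alpha> T0) T) \<longlongrightarrow> - K2 q (\<alpha> T0) T0 T0 / K1 q (\<alpha> T0) (\<alpha> T0) T0) (at T0)"
      by (intro tendsto_intros K2_tendsto K1_tendsto cont[OF T0] K1nz) (use aP T0 in auto)
    then have "((\<lambda>T. (\<alpha> T - \<alpha> T0) / (T - T0)) \<longlongrightarrow> - K2 q (\<alpha> T0) T0 T0 / K1 q (\<alpha> T0) (\<alpha> T0) T0) (at T0)"
      by (rule Lim_transform_eventually)
         (use eventually_at_in_open[OF open_ball T0] eq in \<open>auto elim!: eventually_mono\<close>)
    then show ?thesis by (simp add: has_field_derivative_iff)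
  qed
  have hol: "\<alpha> holomorphic_on ball 0 \<delta>"
    unfolding holomorphic_on_def field_differentiable_def
    using deriv by (metis has_field_derivative_at_within)
  show ?thesis
  proof (rule that[OF dl hol a00 zero])
    fix T :: complex assume "T \<in> ball 0 \<delta>"
    then have "dist a0 (\<alpha> T) \<le> r" using aP by auto
    then show "\<alpha> T \<in> cball a0 eps" using r by simp
  qed
qed


definition pk :: "nat \<Rightarrow> nat \<Rightarrow> complex poly" where
  "pk n k = [:-1,1:]^k * [:1,1:]^(n-k)"

lemma degree_pk: "k \<le> n \<Longrightarrow> degree (pk n k) = n"
  unfolding pk_def by (subst degree_mult_eq) (auto simp: degree_power_eq)

lemma degree_pk_le: "degree (pk n k) \<le> n + k"
proof -
  have "degree (pk n k) \<le> degree ([:-1,1:]^k :: complex poly) + degree ([:1,1:]^(n-k) :: complex poly)"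
    unfolding pk_def by (rule degree_mult_le)
  also have "\<dots> \<le> n + k" by (simp add: degree_power_eq)
  finally show ?thesis .
qed

lemma reflect_u: "reflect_poly [:-1,1:] = Polynomial.smult (-1) [:-1,(1::complex):]"
  by (simp add: reflect_poly_def)

lemma reflect_v: "reflect_poly [:1,1:] = [:1,(1::complex):]"
  by (simp add: reflect_poly_def)

lemma reflect_pk: "reflect_poly (pk n k) = Polynomial.smult ((-1)^k) (pk n k)"
  unfolding pk_def reflect_poly_mult reflect_poly_power reflect_u reflect_v smult_power
  by simp

lemma pk_refl:
  assumes "k \<le> n" "i \<le> n"
  shows "coeff (pk n k) i = (-1)^k * coeff (pk n k) (n - i)"
proof -
  have "coeff (reflect_poly (pk n k)) i = coeff (pk n k) (n - i)"
    using assms by (simp add: coeff_reflect_poly degree_pk)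
  then have "(-1)^k * coeff (pk n k) i = coeff (pk n k) (n - i)"
    by (simp add: reflect_pk)
  moreover have "(-1::complex)^k * (-1)^k = 1" by (simp flip: power_add)
  ultimately show ?thesis by (metis mult.assoc mult_1)
qed


lemma pk_deriv:
  assumes "k \<le> n"
  shows "pderiv (pk n k) = Polynomial.smult (of_nat k / 2) (pk n (k-1))
      + Polynomial.smult ((of_nat n - 2 * of_nat k)/2) (pk n k)
      - Polynomial.smult ((of_nat n - of_nat k)/2) (pk n (k+1))"
proof -
  define u :: "complex poly" where "u = [:-1,1:]"
  define v :: "complex poly" where "v = [:1,1:]"
  have pk': "pk n j = u^j * v^(n-j)" for j by (simp add: pk_def u_def v_def)
  have vu: "v - u = [:2:]" by (simp add: u_def v_def)
  have d: "pderiv (pk n k) = u^k * Polynomial.smult (of_nat (n-k)) (v^(n-k-1)) + v^(n-k) * Polynomial.smult (of_nat k) (u^(k-1))"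
    unfolding pk' pderiv_mult pderiv_power by (simp add: u_def v_def pderiv_pCons)
  have L1: "v^(n-k) * Polynomial.smult (of_nat k) (u^(k-1)) = Polynomial.smult (of_nat k / 2) (pk n (k-1) - pk n k)"
  proof (cases k)
    case 0 then show ?thesis by simp
  next
    case (Suc j)
    have nj: "n - j = Suc (n - k)" using Suc assms by simp
    have "pk n (k-1) - pk n k = u^j * v^(n-k) * (v - u)"
      by (simp add: pk' Suc nj algebra_simps)
    also have "\<dots> = Polynomial.smult 2 (u^j * v^(n-k))" by (simp add: vu)
    finally have e: "pk n (k-1) - pk n k = Polynomial.smult 2 (u^j * v^(n-k))" .
    have kj: "k - 1 = j" using Suc by simp
    have c: "(of_nat k / 2 * 2 :: complex) = of_nat k" by simp
    show ?thesis unfolding kj e[unfolded kj] smult_smult c by (simp add: mult.commute)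
  qed
  have L2: "u^k * Polynomial.smult (of_nat (n-k)) (v^(n-k-1)) = Polynomial.smult (of_nat (n-k)/2) (pk n k - pk n (k+1))"
  proof (cases "n - k")
    case 0 then show ?thesis by simp
  next
    case (Suc j)
    have nk1: "n - Suc k = j" using Suc by simp
    have "pk n k - pk n (k+1) = u^k * v^j * (v - u)"
      by (simp add: pk' Suc nk1 algebra_simps)
    also have "\<dots> = Polynomial.smult 2 (u^k * v^j)" by (simp add: vu)
    finally have e: "pk n k - pk n (k+1) = Polynomial.smult 2 (u^k * v^j)" .
    have nkj: "n - k - 1 = j" "n - Suc k = j" using Suc by simp_all
    have c: "(of_nat (n-k) / 2 * 2 :: complex) = of_nat (n-k)" by simp
    have vv: "v^(n-k-1) = v^j" "v^(n - Suc k) = v^j" using nkj by simp_all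
    show ?thesis unfolding vv(1) e smult_smult c by (simp add: mult.commute)
  qed
  have nk: "(of_nat (n-k) :: complex) = of_nat n - of_nat k" using assms by (simp add: of_nat_diff)
  have "pderiv (pk n k) = Polynomial.smult (of_nat (n-k)/2) (pk n k - pk n (k+1)) + Polynomial.smult (of_nat k / 2) (pk n (k-1) - pk n k)"
    using d L1 L2 by simp
  then show ?thesis
    unfolding nk
    by (intro poly_eqI) (simp add: field_simps)
qed

definition Gp :: "nat \<Rightarrow> complex \<Rightarrow> complex mat" where
  "Gp l T = Matrix.mat l l (\<lambda>(i, j). if i + j + 1 = l then 1
      else if i + j = l then - (T * of_nat (l - i)) else 0)"

definition Pm :: "nat \<Rightarrow> complex mat" where
  "Pm l = Matrix.mat l l (\<lambda>(i, k). coeff (pk (l-1) k) i)"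

definition Bm :: "nat \<Rightarrow> complex \<Rightarrow> complex mat" where
  "Bm l T = Matrix.mat l l (\<lambda>(i, j). if i = j then (-1)^i * (1 - T * ((of_nat (l-1) - 2 * of_nat i) / 2))
      else if j = i + 1 then (-1)^j * T * (of_nat j / 2)
      else if i = j + 1 then (-1)^i * T * ((of_nat (l-1) - of_nat j) / 2) else 0)"

lemma Gp_carrier[simp]: "Gp l T \<in> carrier_mat l l" by (simp add: Gp_def)
lemma Pm_carrier[simp]: "Pm l \<in> carrier_mat l l" by (simp add: Pm_def)
lemma Bm_carrier[simp]: "Bm l T \<in> carrier_mat l l" by (simp add: Bm_def)
lemma dims[simp]: "dim_row (Gp l T) = l" "dim_col (Gp l T) = l" "dim_row (Pm l) = l" "dim_col (Pm l) = l"
  "dim_row (Bm l T) = l" "dim_col (Bm l T) = l"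
  by (simp_all add: Gp_def Pm_def Bm_def)

lemma GP_entry:
  assumes i: "i < l" and k: "k < l"
  shows "(Gp l T * Pm l) $$ (i,k) = coeff (pk (l-1) k) (l-1-i) - T * coeff (pderiv (pk (l-1) k)) (l-1-i)"
proof -
  define n where "n = l - 1"
  have ln: "l = Suc n" using i by (simp add: n_def)
  have "(Gp l T * Pm l) $$ (i,k) = (\<Sum>j\<in>{0..<l}. Gp l T $$ (i,j) * Pm l $$ (j,k))"
    using i k by (simp add: scalar_prod_def index_mult_mat)
  also have "\<dots> = (\<Sum>j\<in>{0..<l}. (if j = n - i then coeff (pk n k) (n - i) else 0)
        + (if j = l - i then - (T * of_nat (l - i)) * coeff (pk n k) (l - i) else 0))"
    by (intro sum.cong refl) (use i k in \<open>auto simp: Gp_def Pm_def n_def\<close>)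
  also have "\<dots> = coeff (pk n k) (n - i) + (if 0 < i then - (T * of_nat (l - i)) * coeff (pk n k) (l - i) else 0)"
  proof -
    have s1: "(\<Sum>j\<in>{0..<l}. if j = n - i then coeff (pk n k) (n - i) else 0) = coeff (pk n k) (n - i)"
      by (subst sum.delta) (use i ln in auto)
    have s2: "(\<Sum>j\<in>{0..<l}. if j = l - i then - (T * of_nat (l - i)) * coeff (pk n k) (l - i) else 0)
        = (if 0 < i then - (T * of_nat (l - i)) * coeff (pk n k) (l - i) else 0)"
      by (subst sum.delta) (use i ln in auto)
    show ?thesis unfolding sum.distrib s1 s2 ..
  qed
  also have "\<dots> = coeff (pk n k) (n - i) - T * coeff (pderiv (pk n k)) (n - i)"
  proof (cases "i = 0")
    case True
    have "coeff (pk n k) (Suc n) = 0"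
      using k by (intro coeff_eq_0) (simp add: degree_pk ln)
    then show ?thesis using True by (simp add: coeff_pderiv)
  next
    case False
    have "Suc (n - i) = l - i" using i ln by simp
    then show ?thesis using False by (simp add: coeff_pderiv mult_ac)
  qed
  finally show ?thesis by (simp add: n_def)
qed

lemma PB_entry:
  assumes i: "i < l" and k: "k < l"
  shows "(Pm l * Bm l T) $$ (i,k) = coeff (pk (l-1) k) (l-1-i) - T * coeff (pderiv (pk (l-1) k)) (l-1-i)"
proof -
  define n where "n = l - 1"
  have ln: "l = Suc n" using i by (simp add: n_def)
  define c where "c j = coeff (pk n j) (n - i)" for j
  define bd :: complex where "bd = (-1)^k * (1 - T * ((of_nat n - 2 * of_nat k) / 2))"
  define bu :: complex where "bu = (-1)^k * T * (of_nat k / 2)"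
  define bl :: complex where "bl = (-1)^(k+1) * T * ((of_nat n - of_nat k) / 2)"
  have P: "Pm l $$ (i, j) = (-1)^j * c j" if "j < l" for j
    using pk_refl[of j n i] that i ln by (simp add: Pm_def c_def)
  have "(Pm l * Bm l T) $$ (i,k) = (\<Sum>j\<in>{0..<l}. Pm l $$ (i,j) * Bm l T $$ (j,k))"
    using i k by (simp add: scalar_prod_def index_mult_mat)
  also have "\<dots> = (\<Sum>j\<in>{0..<l}. (if j = k then Pm l $$ (i,k) * bd else 0)
        + (if j = k - 1 then (if 0 < k then Pm l $$ (i,k-1) * bu else 0) else 0)
        + (if j = k + 1 then Pm l $$ (i,k+1) * bl else 0))"
  proof (intro sum.cong refl)
    fix j assume "j \<in> {0..<l}"
    then have j: "j < l" by simp
    show "Pm l $$ (i,j) * Bm l T $$ (j,k) = (if j = k then Pm l $$ (i,k) * bd else 0)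
        + (if j = k - 1 then (if 0 < k then Pm l $$ (i,k-1) * bu else 0) else 0)
        + (if j = k + 1 then Pm l $$ (i,k+1) * bl else 0)"
      using j k by (auto simp: Bm_def bd_def bu_def bl_def n_def)
  qed
  also have "\<dots> = Pm l $$ (i,k) * bd + (if 0 < k then Pm l $$ (i,k-1) * bu else 0)
      + (if k + 1 < l then Pm l $$ (i,k+1) * bl else 0)"
  proof -
    have s1: "(\<Sum>j\<in>{0..<l}. if j = k then Pm l $$ (i,k) * bd else 0) = Pm l $$ (i,k) * bd"
      by (subst sum.delta) (use k in auto)
    have s2: "(\<Sum>j\<in>{0..<l}. if j = k - 1 then (if 0 < k then Pm l $$ (i,k-1) * bu else 0) else 0)
       = (if 0 < k then Pm l $$ (i,k-1) * bu else 0)"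
      by (subst sum.delta) (use k in auto)
    have s3: "(\<Sum>j\<in>{0..<l}. if j = k + 1 then Pm l $$ (i,k+1) * bl else 0)
       = (if k + 1 < l then Pm l $$ (i,k+1) * bl else 0)"
      by (subst sum.delta) (use k in auto)
    show ?thesis unfolding sum.distrib s1 s2 s3 ..
  qed
  also have "\<dots> = c k - T * ((of_nat k / 2) * c (k-1) + ((of_nat n - 2 * of_nat k) / 2) * c k
      - ((of_nat n - of_nat k) / 2) * c (k+1))"
  proof -
    have t1: "Pm l $$ (i,k) * bd = c k * (1 - T * ((of_nat n - 2 * of_nat k) / 2))"
      using P[OF k] by (simp add: bd_def flip: power_add)
    have t2: "(if 0 < k then Pm l $$ (i,k-1) * bu else 0) = - (T * (of_nat k / 2) * c (k-1))"
    proof (cases k)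
      case (Suc m)
      have sg: "(-1::complex)^m * (-1)^(Suc m) = -1"
      proof -
        have "(-1::complex)^m * (-1)^m = 1" by (simp flip: power_add)
        then show ?thesis by simp
      qed
      have "Pm l $$ (i,k-1) * bu = ((-1)^m * (-1)^(Suc m)) * (T * (of_nat k / 2) * c (k-1))"
        using P[of "k-1"] k Suc by (simp add: bu_def mult_ac)
      then show ?thesis using Suc sg by simp
    qed simp
    have t3: "(if k + 1 < l then Pm l $$ (i,k+1) * bl else 0) = T * ((of_nat n - of_nat k) / 2) * c (k+1)"
    proof (cases "k + 1 < l")
      case True
      have sg: "(-1::complex)^(k+1) * (-1)^(k+1) = 1" by (simp flip: power_add)
      have "Pm l $$ (i,k+1) * bl = ((-1)^(k+1) * (-1)^(k+1)) * (T * ((of_nat n - of_nat k) / 2) * c (k+1))"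
        using P[of "k+1"] True by (simp add: bl_def mult_ac)
      then show ?thesis using True sg by simp
    next
      case False
      then have "k = n" using k ln by simp
      then show ?thesis using False by simp
    qed
    show ?thesis unfolding t1 t2 t3 by (simp add: algebra_simps)
  qed
  also have "\<dots> = coeff (pk n k) (n - i) - T * coeff (pderiv (pk n k)) (n - i)"
    using k ln by (simp add: pk_deriv c_def)
  finally show ?thesis by (simp add: n_def)
qed

lemma sim: "Gp l T * Pm l = Pm l * Bm l T"
proof (rule eq_matI)
  fix i j assume "i < dim_row (Pm l * Bm l T)" "j < dim_col (Pm l * Bm l T)"
  then have "i < l" "j < l" by simp_all
  then show "(Gp l T * Pm l) $$ (i, j) = (Pm l * Bm l T) $$ (i, j)"
    by (simp only: GP_entry PB_entry)
qed simp_all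


lemma pk_indep:
  assumes S: "(\<Sum>k<l. Polynomial.smult (c k) (pk n k)) = 0" and ln: "l = Suc n"
  shows "\<forall>k<l. c k = 0"
proof (rule ccontr)
  assume "\<not> (\<forall>k<l. c k = 0)"
  then have ex: "\<exists>k. k < l \<and> c k \<noteq> 0" by auto
  define k0 where "k0 = (LEAST k. k < l \<and> c k \<noteq> 0)"
  have k0: "k0 < l" "c k0 \<noteq> 0" using LeastI_ex[OF ex] by (auto simp: k0_def)
  have below: "c k = 0" if "k < k0" for k
    using not_less_Least[of k "\<lambda>k. k < l \<and> c k \<noteq> 0"] that k0 by (auto simp: k0_def)
  define u :: "complex poly" where "u = [:-1,1:]"
  define v :: "complex poly" where "v = [:1,1:]"
  have pk': "pk n j = u^j * v^(n-j)" for j by (simp add: pk_def u_def v_def)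
  have dv: "u^(Suc k0) dvd Polynomial.smult (c k) (pk n k)" if "k \<in> {..<l} - {k0}" for k
  proof (cases "k < k0")
    case True then show ?thesis using below by simp
  next
    case False
    then have "Suc k0 \<le> k" using that by auto
    then have "u^(Suc k0) dvd u^k" by (rule le_imp_power_dvd)
    then show ?thesis unfolding pk' by (simp add: dvd_smult dvd_mult2)
  qed
  have "Polynomial.smult (c k0) (pk n k0) = - (\<Sum>k\<in>{..<l} - {k0}. Polynomial.smult (c k) (pk n k))"
    using S sum.remove[of "{..<l}" k0 "\<lambda>k. Polynomial.smult (c k) (pk n k)"] k0
    by (simp add: eq_neg_iff_add_eq_0)
  moreover have "u^(Suc k0) dvd (\<Sum>k\<in>{..<l} - {k0}. Polynomial.smult (c k) (pk n k))"
    by (rule dvd_sum) (use dv in blast)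
  ultimately have "u^k0 * u dvd u^k0 * Polynomial.smult (c k0) (v^(n-k0))"
    by (simp add: pk' mult_ac)
  then have "u dvd Polynomial.smult (c k0) (v^(n-k0))"
    by (subst (asm) dvd_times_left_cancel_iff) (auto simp: u_def)
  then have "poly (Polynomial.smult (c k0) (v^(n-k0))) 1 = 0"
    unfolding u_def poly_eq_0_iff_dvd by simp
  then show False using k0 by (simp add: v_def)
qed

lemma Pm_det: "det (Pm l) \<noteq> 0"
proof
  assume "det (Pm l) = 0"
  then obtain w where w: "w \<in> carrier_vec l" "w \<noteq> 0\<^sub>v l" "Pm l *\<^sub>v w = 0\<^sub>v l"
    using det_0_iff_vec_prod_zero[OF Pm_carrier] by blast
  have l0: "l \<noteq> 0"
  proof
    assume "l = 0"
    then have "w = 0\<^sub>v l" using w(1) by (intro eq_vecI) simp_all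
    then show False using w(2) by simp
  qed
  define n where "n = l - 1"
  have ln: "l = Suc n" using l0 by (simp add: n_def)
  define S where "S = (\<Sum>k<l. Polynomial.smult (vec_index w k) (pk n k))"
  have cS: "coeff S i = (\<Sum>k<l. vec_index w k * coeff (pk n k) i)" for i
    unfolding S_def by (simp add: coeff_sum)
  have "coeff S i = 0" for i
  proof (cases "i < l")
    case True
    have "vec_index (Pm l *\<^sub>v w) i = Matrix.row (Pm l) i \<bullet> w"
      using True by simp
    also have "\<dots> = (\<Sum>k\<in>{0..<l}. Pm l $$ (i,k) * vec_index w k)"
      using w(1) True by (auto simp: scalar_prod_def intro!: sum.cong)
    also have "\<dots> = (\<Sum>k<l. vec_index w k * coeff (pk n k) i)"
      unfolding atLeast0LessThan by (intro sum.cong refl) (use True in \<open>simp add: Pm_def n_def\<close>)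
    finally have "coeff S i = vec_index (Pm l *\<^sub>v w) i" by (simp add: cS)
    then show ?thesis using w(3) True by simp
  next
    case False
    have "coeff (pk n k) i = 0" if "k < l" for k
    proof (rule coeff_eq_0)
      have "degree (pk n k) = n" using that ln by (intro degree_pk) simp
      then show "degree (pk n k) < i" using False ln by simp
    qed
    then show ?thesis unfolding cS by simp
  qed
  then have "S = 0" by (intro poly_eqI) simp
  then have all0: "\<forall>k<l. vec_index w k = 0" using pk_indep[OF _ ln] unfolding S_def by blast
  have "w = 0\<^sub>v l" using w(1) all0 by (intro eq_vecI) simp_all
  then show False using w(2) by simp
qed

definition Qf :: "nat \<Rightarrow> complex \<Rightarrow> complex \<Rightarrow> complex \<Rightarrow> complex" where
  "Qf l s R T = det (Gp l T + (s * R) \<cdot>\<^sub>m 1\<^sub>m l)"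

lemma Q_B: "Qf l s R T = det (Bm l T + (s * R) \<cdot>\<^sub>m 1\<^sub>m l)"
proof -
  let ?c = "(s * R) \<cdot>\<^sub>m 1\<^sub>m l"
  have "(Gp l T + ?c) * Pm l = Gp l T * Pm l + ?c * Pm l"
    by (rule add_mult_distrib_mat) auto
  also have "\<dots> = Pm l * Bm l T + Pm l * ?c"
  proof -
    have "?c * Pm l = (s * R) \<cdot>\<^sub>m (1\<^sub>m l * Pm l)" by (rule mult_smult_assoc_mat) auto
    also have "\<dots> = (s * R) \<cdot>\<^sub>m (Pm l * 1\<^sub>m l)" by simp
    also have "\<dots> = Pm l * ?c" by (rule mult_smult_distrib[symmetric]) auto
    finally show ?thesis by (simp add: sim)
  qed
  also have "\<dots> = Pm l * (Bm l T + ?c)"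
    by (rule mult_add_distrib_mat[symmetric]) auto
  finally have eq: "(Gp l T + ?c) * Pm l = Pm l * (Bm l T + ?c)" .
  have "det (Gp l T + ?c) * det (Pm l) = det (Pm l) * det (Bm l T + ?c)"
    using arg_cong[OF eq, of det] by (simp add: det_mult[of _ l])
  then show ?thesis using Pm_det[of l] by (simp add: Qf_def mult.commute)
qed

lemma Xi_scale:
  assumes mu: "\<mu> \<noteq> 0"
  shows "Xi_poly l s \<mu> r = \<mu>^l * Qf l s (r/\<mu>) (1/\<mu>)"
proof -
  have "G_mat l \<mu> + (s * r) \<cdot>\<^sub>m 1\<^sub>m l = \<mu> \<cdot>\<^sub>m (Gp l (1/\<mu>) + (s * (r/\<mu>)) \<cdot>\<^sub>m 1\<^sub>m l)"
  proof (rule eq_matI)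
    fix i j assume ij: "i < dim_row (\<mu> \<cdot>\<^sub>m (Gp l (1/\<mu>) + (s * (r/\<mu>)) \<cdot>\<^sub>m 1\<^sub>m l))"
       "j < dim_col (\<mu> \<cdot>\<^sub>m (Gp l (1/\<mu>) + (s * (r/\<mu>)) \<cdot>\<^sub>m 1\<^sub>m l))"
    then have i: "i < l" and j: "j < l" by simp_all
    have L: "(G_mat l \<mu> + (s * r) \<cdot>\<^sub>m 1\<^sub>m l) $$ (i,j) = G_mat l \<mu> $$ (i,j) + (if i = j then s * r else 0)"
      using i j by (simp add: G_mat_def)
    have R: "(\<mu> \<cdot>\<^sub>m (Gp l (1/\<mu>) + (s * (r/\<mu>)) \<cdot>\<^sub>m 1\<^sub>m l)) $$ (i,j) = \<mu> * (Gp l (1/\<mu>) $$ (i,j) + (if i = j then s * (r/\<mu>) else 0))"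
      using i j by simp
    have G: "G_mat l \<mu> $$ (i,j) = \<mu> * Gp l (1/\<mu>) $$ (i,j)"
      using i j mu by (simp add: G_mat_def Gp_def)
    show "(G_mat l \<mu> + (s * r) \<cdot>\<^sub>m 1\<^sub>m l) $$ (i,j) = (\<mu> \<cdot>\<^sub>m (Gp l (1/\<mu>) + (s * (r/\<mu>)) \<cdot>\<^sub>m 1\<^sub>m l)) $$ (i,j)"
      unfolding L R G using mu by (simp add: distrib_left)
  qed (simp_all add: G_mat_def)
  then show ?thesis by (simp add: Xi_poly_def Qf_def)
qed


lemma ev2_pCons: "ev2 (pCons c p) a T = poly c T + a * ev2 p a T"
  unfolding ev2_def by (cases "c = 0 \<and> p = 0") (auto simp: map_poly_simps)
lemma ev2_0[simp]: "ev2 0 a T = 0" by (simp add: ev2_def)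

lemma ev2_hom: "comm_ring_hom (\<lambda>q. ev2 q a T)"
proof -
  interpret m: map_poly_comm_ring_hom "\<lambda>c. poly c T" by unfold_locales
  show ?thesis unfolding ev2_def by unfold_locales (simp_all add: m.hom_add m.hom_mult)
qed

definition inK :: "complex \<Rightarrow> complex \<Rightarrow> nat \<Rightarrow> bool" where
  "inK s e i \<longleftrightarrow> (-1::complex)^i = - (s * e)"

definition Mpp :: "nat \<Rightarrow> complex \<Rightarrow> complex \<Rightarrow> complex poly poly mat" where
  "Mpp l s e = Matrix.mat l l (\<lambda>(i,j).
   if inK s e i then
     (if i = j then [: [: s * e * ((of_nat (l-1) - 2 * of_nat i)/2) :], [: s :] :]
      else if j = i + 1 then [: [: (-1)^j * (of_nat j / 2) :] :]
      else if i = j + 1 then [: [: (-1)^i * ((of_nat (l-1) - of_nat j)/2) :] :]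
      else 0)
   else
     (if i = j then [: [: (-1)^i + s*e, - ((-1)^i * ((of_nat (l-1) - 2 * of_nat i)/2)) :], [: 0, s :] :]
      else if j = i + 1 then [: [: 0, (-1)^j * (of_nat j / 2) :] :]
      else if i = j + 1 then [: [: 0, (-1)^i * ((of_nat (l-1) - of_nat j)/2) :] :]
      else 0))"

definition Hpp :: "nat \<Rightarrow> complex \<Rightarrow> complex \<Rightarrow> complex poly poly" where
  "Hpp l s e = det (Mpp l s e)"

definition Mev :: "nat \<Rightarrow> complex \<Rightarrow> complex \<Rightarrow> complex \<Rightarrow> complex \<Rightarrow> complex mat" where
  "Mev l s e a T = map_mat (\<lambda>q. ev2 q a T) (Mpp l s e)"

lemma Mpp_carrier[simp]: "Mpp l s e \<in> carrier_mat l l" by (simp add: Mpp_def)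
lemma Mev_carrier[simp]: "Mev l s e a T \<in> carrier_mat l l" by (simp add: Mev_def)

lemma ev2_Hpp: "ev2 (Hpp l s e) a T = det (Mev l s e a T)"
proof -
  interpret h: comm_ring_hom "\<lambda>q. ev2 q a T" by (rule ev2_hom)
  show ?thesis unfolding Hpp_def Mev_def by (simp only: h.hom_det)
qed

lemma Mev_entry:
  assumes "i < l" "j < l"
  shows "Mev l s e a T $$ (i,j) =
   (if inK s e i then
     (if i = j then s * e * ((of_nat (l-1) - 2 * of_nat i)/2) + s * a
      else if j = i + 1 then (-1)^j * (of_nat j / 2)
      else if i = j + 1 then (-1)^i * ((of_nat (l-1) - of_nat j)/2)
      else 0)
   else
     (if i = j then (-1)^i + s*e - ((-1)^i * ((of_nat (l-1) - 2 * of_nat i)/2)) * T + s * T * a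
      else if j = i + 1 then (-1)^j * (of_nat j / 2) * T
      else if i = j + 1 then (-1)^i * ((of_nat (l-1) - of_nat j)/2) * T
      else 0))"
  using assms by (simp add: Mev_def Mpp_def ev2_pCons algebra_simps)

lemma Mev_prod:
  "Bm l T + (s*(e + a*T)) \<cdot>\<^sub>m 1\<^sub>m l = mat_diag l (\<lambda>i. if inK s e i then T else 1) * Mev l s e a T"
proof -
  have r: "mat_diag l (\<lambda>i. if inK s e i then T else 1) * Mev l s e a T
     = Matrix.mat l l (\<lambda>(i,j). (if inK s e i then T else 1) * Mev l s e a T $$ (i,j))"
    by (rule mat_diag_mult_left) simp
  show ?thesis
    unfolding r
  proof (rule eq_matI)
    fix i j assume "i < dim_row (Matrix.mat l l (\<lambda>(i,j). (if inK s e i then T else 1) * Mev l s e a T $$ (i,j)))"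
      "j < dim_col (Matrix.mat l l (\<lambda>(i,j). (if inK s e i then T else 1) * Mev l s e a T $$ (i,j)))"
    then have i: "i < l" and j: "j < l" by simp_all
    show "(Bm l T + (s*(e + a*T)) \<cdot>\<^sub>m 1\<^sub>m l) $$ (i,j) =
      Matrix.mat l l (\<lambda>(i,j). (if inK s e i then T else 1) * Mev l s e a T $$ (i,j)) $$ (i,j)"
    proof (cases "inK s e i")
      case True
      then have m: "(-1::complex)^i = - (s*e)" by (simp add: inK_def)
      show ?thesis
      proof (cases "i = j")
        case ij: True
        then have m': "(-1::complex)^j = - (s*e)" using m by simp
        show ?thesis using i j True ij by (simp add: Mev_entry Bm_def m m' field_simps)
      next
        case False
        then show ?thesis using i j True by (simp add: Mev_entry Bm_def algebra_simps)
      qed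
    next
      case False
      show ?thesis using i j False
        by (simp add: Mev_entry Bm_def algebra_simps)
    qed
  qed simp_all
qed

lemma det_mat_diag: "det (mat_diag n f) = (\<Prod>i<n. f i)"
proof -
  have "det (mat_diag n f) = prod_list (diag_mat (mat_diag n f))"
    by (rule det_upper_triangular) (auto simp: mat_diag_def upper_triangular_def)
  also have "\<dots> = (\<Prod>i<n. f i)"
    by (simp add: prod_list_diag_prod mat_diag_def atLeast0LessThan)
  finally show ?thesis .
qed

lemma Q_H:
  "Qf l s (e + a*T) T = T^(card {i. i < l \<and> inK s e i}) * ev2 (Hpp l s e) a T"
proof -
  have "Qf l s (e + a*T) T = det (mat_diag l (\<lambda>i. if inK s e i then T else 1) * Mev l s e a T)"
    by (simp add: Q_B Mev_prod)
  also have "\<dots> = (\<Prod>i<l. if inK s e i then T else 1) * det (Mev l s e a T)"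
    by (simp add: det_mult[of _ l] det_mat_diag)
  also have "(\<Prod>i<l. if inK s e i then T else 1) = T^(card {i. i < l \<and> inK s e i})"
  proof -
    have "(\<Prod>i<l. if inK s e i then T else 1) = (\<Prod>i\<in>{i\<in>{..<l}. inK s e i}. T)"
      by (rule prod.inter_filter[symmetric]) simp
    also have "{i\<in>{..<l}. inK s e i} = {i. i < l \<and> inK s e i}" by auto
    finally show ?thesis by simp
  qed
  finally show ?thesis by (simp add: ev2_Hpp)
qed


lemma det_sparse:
  assumes A: "A \<in> carrier_mat n n"
  and z1: "\<And>i j. i < n \<Longrightarrow> j < n \<Longrightarrow> i \<noteq> j \<Longrightarrow> \<not> P i \<Longrightarrow> A $$ (i,j) = 0"
  and z2: "\<And>i j. i < n \<Longrightarrow> j < n \<Longrightarrow> i \<noteq> j \<Longrightarrow> P i \<Longrightarrow> P j \<Longrightarrow> A $$ (i,j) = 0"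
  shows "det A = (\<Prod>i<n. A $$ (i,i))"
proof -
  have zero: "(\<Prod>i = 0..<n. A $$ (i, p i)) = 0" if p: "p permutes {0..<n}" "p \<noteq> id" for p
  proof -
    obtain i where i: "p i \<noteq> i" using p(2) by (metis eq_id_iff)
    have iS: "i < n" using permutes_not_in[OF p(1)] i by fastforce
    have pi: "p i < n" using permutes_in_image[OF p(1)] iS by simp
    have inj: "inj p" using p(1) by (rule permutes_inj)
    show ?thesis
    proof (cases "P i")
      case False
      then have "A $$ (i, p i) = 0" using z1 iS pi i by auto
      then show ?thesis using iS by (intro prod_zero) auto
    next
      case Pi: True
      show ?thesis
      proof (cases "P (p i)")
        case True
        then have "A $$ (i, p i) = 0" using z2 iS pi i Pi by auto
        then show ?thesis using iS by (intro prod_zero) auto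
      next
        case False
        have ne: "p (p i) \<noteq> p i"
        proof
          assume "p (p i) = p i"
          then have "p i = i" using inj by (meson injD)
          then show False using i by simp
        qed
        have ppi: "p (p i) < n" using permutes_in_image[OF p(1)] pi by simp
        have "A $$ (p i, p (p i)) = 0" using z1[OF pi ppi] ne False by auto
        then show ?thesis using pi by (intro prod_zero) auto
      qed
    qed
  qed
  have fin: "finite {p. p permutes {0..<n}}" by (rule finite_permutations) simp
  have idin: "id \<in> {p. p permutes {0..<n}}" by (simp add: permutes_id)
  have "det A = (\<Sum>p\<in>{p. p permutes {0..<n}}. signof p * (\<Prod>i = 0..<n. A $$ (i, p i)))"
    by (rule det_def'[OF A])
  also have "\<dots> = signof id * (\<Prod>i = 0..<n. A $$ (i, id i))
      + (\<Sum>p\<in>{p. p permutes {0..<n}} - {id}. signof p * (\<Prod>i = 0..<n. A $$ (i, p i)))"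
    by (rule sum.remove[OF fin idin])
  also have "(\<Sum>p\<in>{p. p permutes {0..<n}} - {id}. signof p * (\<Prod>i = 0..<n. A $$ (i, p i))) = 0"
    by (rule sum.neutral) (use zero in auto)
  finally show ?thesis by (simp add: atLeast0LessThan)
qed

definition dH :: "nat \<Rightarrow> complex \<Rightarrow> complex \<Rightarrow> nat \<Rightarrow> complex \<Rightarrow> complex" where
  "dH l s e i a = (if inK s e i then s * e * ((of_nat (l-1) - 2 * of_nat i)/2) + s * a else (-1)^i + s * e)"

lemma inK_Suc: "s * e \<noteq> 0 \<Longrightarrow> inK s e i \<Longrightarrow> \<not> inK s e (Suc i)"
  unfolding inK_def by auto

lemma H0: assumes se: "s * e \<noteq> 0"
  shows "ev2 (Hpp l s e) a 0 = (\<Prod>i<l. dH l s e i a)"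
proof -
  have "det (Mev l s e a 0) = (\<Prod>i<l. Mev l s e a 0 $$ (i,i))"
  proof (rule det_sparse[where P = "inK s e"])
    fix i j assume "i < l" "j < l" "i \<noteq> j" "\<not> inK s e i"
    then show "Mev l s e a 0 $$ (i,j) = 0" by (simp add: Mev_entry)
  next
    fix i j assume ij: "i < l" "j < l" "i \<noteq> j" "inK s e i" "inK s e j"
    have "j \<noteq> i + 1" using inK_Suc[OF se ij(4)] ij(5) by auto
    moreover have "i \<noteq> j + 1" using inK_Suc[OF se ij(5)] ij(4) by auto
    ultimately show "Mev l s e a 0 $$ (i,j) = 0" using ij by (simp add: Mev_entry)
  qed simp
  also have "\<dots> = (\<Prod>i<l. dH l s e i a)"
    by (intro prod.cong refl) (simp add: Mev_entry dH_def)
  finally show ?thesis by (simp add: ev2_Hpp)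
qed

definition ak :: "nat \<Rightarrow> complex \<Rightarrow> nat \<Rightarrow> complex" where
  "ak l e k = - e * ((of_nat (l-1) - 2 * of_nat k)/2)"

lemma dH_k: "inK s e k \<Longrightarrow> dH l s e k a = s * (a - ak l e k)"
  by (simp add: dH_def ak_def field_simps)

lemma dH_nz:
  assumes "s \<noteq> 0" "e \<noteq> 0" "inK s e k" "i \<noteq> k"
  shows "dH l s e i (ak l e k) \<noteq> 0"
proof (cases "inK s e i")
  case True
  have "dH l s e i (ak l e k) = s * e * (of_nat k - of_nat i)"
    using True by (simp add: dH_def ak_def field_simps)
  then show ?thesis using assms by simp
next
  case False
  then show ?thesis by (auto simp: dH_def inK_def add_eq_0_iff2)
qed

lemma H_root:
  assumes "s \<noteq> 0" "e \<noteq> 0" "k < l" "inK s e k"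
  shows "ev2 (Hpp l s e) (ak l e k) 0 = 0" "K1 (Hpp l s e) (ak l e k) (ak l e k) 0 \<noteq> 0"
proof -
  have se: "s * e \<noteq> 0" using assms by simp
  define a0 where "a0 = ak l e k"
  define g where "g a = (\<Prod>i\<in>{..<l} - {k}. dH l s e i a)" for a
  have f: "ev2 (Hpp l s e) a 0 = s * (a - a0) * g a" for a
    unfolding H0[OF se] g_def a0_def
    by (subst prod.remove[of _ k]) (use assms in \<open>auto simp: dH_k\<close>)
  show z: "ev2 (Hpp l s e) (ak l e k) 0 = 0" using f[of a0] by (simp add: a0_def)
  have gnz: "g a0 \<noteq> 0" unfolding g_def a0_def
    using dH_nz[OF assms(1,2,4)] by (simp add: prod_zero_iff)
  have eqK: "K1 (Hpp l s e) a a0 0 = s * g a" if "a \<noteq> a0" for a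
  proof -
    have "(a - a0) * K1 (Hpp l s e) a a0 0 = ev2 (Hpp l s e) a 0 - ev2 (Hpp l s e) a0 0"
      by (simp add: K1_eq)
    also have "\<dots> = (a - a0) * (s * g a)" using z f[of a] by (simp add: a0_def mult_ac)
    finally show ?thesis using that by simp
  qed
  have t1: "((\<lambda>a. K1 (Hpp l s e) a a0 0) \<longlongrightarrow> K1 (Hpp l s e) a0 a0 0) (at a0)"
    by (rule K1_tendsto) (auto intro!: tendsto_intros)
  have tg: "(g \<longlongrightarrow> g a0) (at a0)"
    unfolding g_def
  proof (rule tendsto_prod)
    fix i show "((\<lambda>a. dH l s e i a) \<longlongrightarrow> dH l s e i a0) (at a0)"
      by (cases "inK s e i") (auto simp: dH_def intro!: tendsto_intros)
  qed
  have t2: "((\<lambda>a. K1 (Hpp l s e) a a0 0) \<longlongrightarrow> s * g a0) (at a0)"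
  proof (rule Lim_transform_eventually)
    show "((\<lambda>a. s * g a) \<longlongrightarrow> s * g a0) (at a0)" by (intro tendsto_intros tg)
    show "\<forall>\<^sub>F a in at a0. s * g a = K1 (Hpp l s e) a a0 0"
      using eventually_at_in_open[OF open_UNIV, of a0] eqK by (auto elim!: eventually_mono)
  qed
  have "K1 (Hpp l s e) a0 a0 0 = s * g a0"
    using tendsto_unique[OF at_neq_bot t1 t2] .
  then show "K1 (Hpp l s e) (ak l e k) (ak l e k) 0 \<noteq> 0" using gnz assms(1) by (simp add: a0_def)
qed


lemma inK_iff:
  assumes "s \<in> {1,-1}" "e \<in> {1,-1}"
  shows "inK s e i \<longleftrightarrow> (if s = e then odd i else even i)"
  using assms by (cases "even i") (auto simp: inK_def)

definition kj :: "complex \<Rightarrow> complex \<Rightarrow> nat \<Rightarrow> nat" where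
  "kj s e j = 2 * j + (if s = e then 1 else 0)"

definition mK :: "nat \<Rightarrow> complex \<Rightarrow> complex \<Rightarrow> nat" where
  "mK l s e = (if s = e then l div 2 else l - l div 2)"

lemma kj_props:
  assumes "s \<in> {1,-1}" "e \<in> {1,-1}" "j < mK l s e"
  shows "kj s e j < l" "inK s e (kj s e j)"
proof -
  have "kj s e j < l \<and> inK s e (kj s e j)"
  proof (cases "s = e")
    case True
    then have "j < l div 2" using assms(3) by (simp add: mK_def)
    then have "2 * j + 1 < l" by presburger
    moreover have "inK s e (2 * j + 1)" using True inK_iff[OF assms(1,2), of "2 * j + 1"] by simp
    ultimately show ?thesis using True by (simp add: kj_def)
  next
    case False
    then have "j < l - l div 2" using assms(3) by (simp add: mK_def)
    then have "2 * j < l" by presburger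
    moreover have "inK s e (2 * j)" using False inK_iff[OF assms(1,2), of "2 * j"] by simp
    ultimately show ?thesis using False by (simp add: kj_def)
  qed
  then show "kj s e j < l" "inK s e (kj s e j)" by auto
qed

lemma kj_inj: "inj (kj s e)"
  by (auto simp: inj_def kj_def)

lemma K_set:
  assumes "s \<in> {1,-1}" "e \<in> {1,-1}"
  shows "{i. i < l \<and> inK s e i} = kj s e ` {..<mK l s e}"
proof
  show "kj s e ` {..<mK l s e} \<subseteq> {i. i < l \<and> inK s e i}"
    using kj_props[OF assms] by auto
next
  show "{i. i < l \<and> inK s e i} \<subseteq> kj s e ` {..<mK l s e}"
  proof
    fix i assume "i \<in> {i. i < l \<and> inK s e i}"
    then have i: "i < l" "inK s e i" by auto
    show "i \<in> kj s e ` {..<mK l s e}"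
    proof (cases "s = e")
      case True
      then have "odd i" using i(2) inK_iff[OF assms, of i] by simp
      then obtain j where ij: "i = 2 * j + 1" using oddE by blast
      have "j < l div 2" using ij i(1) by presburger
      then have "j < mK l s e" using True by (simp add: mK_def)
      moreover have "kj s e j = i" using True ij by (simp add: kj_def)
      ultimately show ?thesis by (intro image_eqI[of _ _ j]) simp_all
    next
      case False
      then have "even i" using i(2) inK_iff[OF assms, of i] by simp
      then obtain j where ij: "i = 2 * j" using evenE by blast
      have "j < l - l div 2" using ij i(1) by presburger
      then have "j < mK l s e" using False by (simp add: mK_def)
      moreover have "kj s e j = i" using False ij by (simp add: kj_def)
      ultimately show ?thesis by (intro image_eqI[of _ _ j]) simp_all
    qed
  qed
qed

lemma K_card:
  assumes "s \<in> {1,-1}" "e \<in> {1,-1}"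
  shows "card {i. i < l \<and> inK s e i} = mK l s e"
proof -
  have "card (kj s e ` {..<mK l s e}) = card {..<mK l s e}"
    by (rule card_image) (use kj_inj in \<open>auto simp: inj_on_def inj_def\<close>)
  then show ?thesis unfolding K_set[OF assms] by simp
qed

lemma mK_sum:
  assumes "s \<in> {1,-1}" "e \<in> {1,-1}"
  shows "mK l s e + mK l s (-e) = l"
proof (cases "s = e")
  case True
  then have "s \<noteq> -e" using assms by auto
  then show ?thesis using True by (simp add: mK_def)
next
  case False
  then have "s = -e" using assms by auto
  then show ?thesis using False by (simp add: mK_def)
qed

lemma ak_kj_dist:
  assumes "e \<in> {1,-1}" "j \<noteq> j'"
  shows "norm (ak l e (kj s e j) - ak l e (kj s e j')) \<ge> 2"
proof -
  have k: "(of_nat (kj s e j) :: complex) - of_nat (kj s e j') = 2 * (of_nat j - of_nat j')"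
    by (simp add: kj_def)
  have "ak l e (kj s e j) - ak l e (kj s e j') = e * (of_nat (kj s e j) - of_nat (kj s e j'))"
    unfolding ak_def by (simp add: algebra_simps diff_divide_distrib)
  also have "\<dots> = 2 * e * (of_nat j - of_nat j')" unfolding k by simp
  finally have "norm (ak l e (kj s e j) - ak l e (kj s e j')) = 2 * norm (of_nat j - of_nat j' :: complex)"
    using assms(1) by (auto simp: norm_mult)
  moreover have "norm (of_nat j - of_nat j' :: complex) \<ge> 1"
  proof -
    have "(of_nat j - of_nat j' :: complex) = of_int (int j - int j')" by simp
    moreover have "\<bar>int j - int j'\<bar> \<ge> 1" using assms(2) by auto
    ultimately show ?thesis by (metis norm_of_int of_int_1_le_iff of_int_abs)
  qed
  ultimately show ?thesis by simp
qed

lemma ak_bound: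
  assumes "e \<in> {1,-1}" "k < l"
  shows "norm (ak l e k) \<le> of_nat l"
proof -
  have "norm (ak l e k) = norm ((of_nat (l-1) - 2 * of_nat k) / 2 :: complex)"
    using assms by (auto simp: ak_def norm_mult)
  also have "(of_nat (l-1) - 2 * of_nat k) / 2 = (of_real ((real (l-1) - 2 * real k) / 2) :: complex)"
    by simp
  also have "norm (of_real ((real (l-1) - 2 * real k) / 2) :: complex) = \<bar>(real (l-1) - 2 * real k) / 2\<bar>"
    by (rule norm_of_real)
  also have "\<dots> \<le> real l"
  proof -
    have h: "real k + 1 \<le> real l" using assms(2) by linarith
    have l1: "real (l - 1) = real l - 1" using assms(2) by (simp add: of_nat_diff)
    show ?thesis unfolding l1 using h by (auto simp: abs_le_iff field_simps)
  qed
  finally show ?thesis by simp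
qed

lemma Qf_char:
  assumes s2: "s * s = 1"
  shows "Qf l s R T = s^l * poly (char_poly ((-s) \<cdot>\<^sub>m Gp l T)) R"
proof -
  let ?A = "(-s) \<cdot>\<^sub>m Gp l T"
  have A: "?A \<in> carrier_mat l l" by simp
  have ss: "s * (s * x) = x" for x by (simp add: mult.assoc[symmetric] s2)
  have eq: "Gp l T + (s * R) \<cdot>\<^sub>m 1\<^sub>m l = s \<cdot>\<^sub>m (- char_matrix ?A R)"
    by (rule eq_matI) (auto simp: char_matrix_def ss algebra_simps)
  show ?thesis unfolding Qf_def eq char_poly_matrix[OF A] by (simp add: char_matrix_def)
qed

lemma Qf_roots:
  assumes s2: "s * s = 1"
  shows "finite {R. Qf l s R T = 0}" "card {R. Qf l s R T = 0} \<le> l"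
proof -
  let ?p = "char_poly ((-s) \<cdot>\<^sub>m Gp l T)"
  have dm: "degree ?p = l \<and> coeff ?p l = 1" by (rule degree_monic_char_poly) simp
  then have p0: "?p \<noteq> 0" by auto
  have sl: "s^l \<noteq> 0" using s2 by (metis mult_zero_left power_not_zero zero_neq_one)
  have eqs: "{R. Qf l s R T = 0} = {R. poly ?p R = 0}"
    using sl by (auto simp: Qf_char[OF s2])
  show "finite {R. Qf l s R T = 0}" unfolding eqs using poly_roots_finite[OF p0] .
  show "card {R. Qf l s R T = 0} \<le> l" unfolding eqs using card_poly_roots_bound[OF p0] dm by simp
qed

lemma Qf_T0: "Qf l s R 0 = (\<Prod>i<l. (-1)^i + s * R)"
proof -
  have "det (Bm l 0 + (s * R) \<cdot>\<^sub>m 1\<^sub>m l) = prod_list (diag_mat (Bm l 0 + (s * R) \<cdot>\<^sub>m 1\<^sub>m l))"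
    by (rule det_upper_triangular[of _ l]) (auto simp: upper_triangular_def Bm_def)
  also have "\<dots> = (\<Prod>i<l. (-1)^i + s * R)"
    by (simp add: prod_list_diag_prod atLeast0LessThan Bm_def)
  finally show ?thesis by (simp add: Q_B)
qed

lemma cont_if_const[continuous_intros]:
  "continuous_on S f \<Longrightarrow> continuous_on S g \<Longrightarrow> continuous_on S (\<lambda>x. if P then f x else g x)"
  by (cases P) auto

lemma Qf_cont: "continuous_on UNIV (\<lambda>x. Qf l s (fst x) (snd x))"
proof -
  have ent: "continuous_on UNIV (\<lambda>x::complex\<times>complex. (Gp l (snd x) + (s * fst x) \<cdot>\<^sub>m 1\<^sub>m l) $$ (i,j))"
    if "i < l" "j < l" for i j
  proof -
    have e: "(Gp l (snd x) + (s * fst x) \<cdot>\<^sub>m 1\<^sub>m l) $$ (i,j) = (if i + j + 1 = l then 1 else 0)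
       + (if i + j + 1 \<noteq> l \<and> i + j = l then - of_nat (l - i) else 0) * snd x + (if i = j then s else 0) * fst x"
      for x :: "complex \<times> complex"
      using that by (auto simp: Gp_def)
    show ?thesis unfolding e by (intro continuous_intros)
  qed
  have eq: "Qf l s (fst x) (snd x) = (\<Sum>p\<in>{p. p permutes {0..<l}}. signof p *
      (\<Prod>i = 0..<l. (Gp l (snd x) + (s * fst x) \<cdot>\<^sub>m 1\<^sub>m l) $$ (i, p i)))" for x
    unfolding Qf_def by (rule det_def') simp
  show ?thesis unfolding eq
  proof (intro continuous_on_sum continuous_on_mult continuous_on_const continuous_on_prod)
    fix p i assume "p \<in> {p. p permutes {0..<l}}" "i \<in> {0..<l}"
    then show "continuous_on UNIV (\<lambda>x. (Gp l (snd x) + (s * fst x) \<cdot>\<^sub>m 1\<^sub>m l) $$ (i, p i))"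
      using ent permutes_in_image by fastforce
  qed
qed


lemma branches:
  assumes s: "s \<in> {1,-1}" and e: "e \<in> {1,-1}"
  obtains \<delta> \<alpha> where "\<delta> > 0"
    "\<And>j. j < mK l s e \<Longrightarrow> \<alpha> j holomorphic_on ball 0 \<delta>"
    "\<And>j. j < mK l s e \<Longrightarrow> \<alpha> j 0 = ak l e (kj s e j)"
    "\<And>j T. j < mK l s e \<Longrightarrow> T \<in> ball 0 \<delta> \<Longrightarrow> Qf l s (e + \<alpha> j T * T) T = 0"
    "\<And>j T. j < mK l s e \<Longrightarrow> T \<in> ball 0 \<delta> \<Longrightarrow> \<alpha> j T \<in> cball (ak l e (kj s e j)) (1/2)"
proof -
  have s0: "s \<noteq> 0" and e0: "e \<noteq> 0" using s e by auto
  define P where "P j d a \<longleftrightarrow> d > 0 \<and> a holomorphic_on ball 0 d \<and> a 0 = ak l e (kj s e j) \<and>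
      (\<forall>T\<in>ball 0 d. ev2 (Hpp l s e) (a T) T = 0 \<and> a T \<in> cball (ak l e (kj s e j)) (1/2))"
    for j d and a :: "complex \<Rightarrow> complex"
  have ex: "\<exists>d a. P j d a" if j: "j < mK l s e" for j
  proof -
    have k: "kj s e j < l" "inK s e (kj s e j)" using kj_props[OF s e j] by auto
    note hr = H_root[OF s0 e0 k]
    obtain d a where "d > 0" "a holomorphic_on ball 0 d" "a 0 = ak l e (kj s e j)"
      "\<And>T. T \<in> ball 0 d \<Longrightarrow> ev2 (Hpp l s e) (a T) T = 0"
      "\<And>T. T \<in> ball 0 d \<Longrightarrow> a T \<in> cball (ak l e (kj s e j)) (1/2)"
      using poly2_ift[OF hr(1) hr(2), of "1/2"] by auto
    then show ?thesis unfolding P_def by blast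
  qed
  then have "\<forall>j\<in>{..<mK l s e}. \<exists>d. \<exists>a. P j d a" by blast
  then obtain df where "\<forall>j\<in>{..<mK l s e}. \<exists>a. P j (df j) a" by (metis bchoice)
  then obtain af where Paf: "\<forall>j\<in>{..<mK l s e}. P j (df j) (af j)" by (metis bchoice)
  define \<delta> where "\<delta> = Min (insert 1 (df ` {..<mK l s e}))"
  have fin: "finite (insert 1 (df ` {..<mK l s e}))" by simp
  have dpos: "\<delta> > 0" unfolding \<delta>_def using Paf by (subst Min_gr_iff[OF fin]) (auto simp: P_def)
  have dle: "\<delta> \<le> df j" if "j < mK l s e" for j
    unfolding \<delta>_def using that by (intro Min_le[OF fin]) auto
  have sub: "ball 0 \<delta> \<subseteq> ball 0 (df j)" if "j < mK l s e" for j
    using dle[OF that] by auto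
  show ?thesis
  proof (rule that[of \<delta> af])
    show "\<delta> > 0" by (rule dpos)
  next
    fix j assume j: "j < mK l s e"
    have "af j holomorphic_on ball 0 (df j)" using Paf j by (auto simp: P_def)
    then show "af j holomorphic_on ball 0 \<delta>" using sub[OF j] by (rule holomorphic_on_subset)
  next
    fix j assume j: "j < mK l s e"
    then show "af j 0 = ak l e (kj s e j)" using Paf by (auto simp: P_def)
  next
    fix j and T :: complex assume j: "j < mK l s e" and T: "T \<in> ball 0 \<delta>"
    have Tin: "T \<in> ball 0 (df j)" using sub[OF j] T by blast
    have "P j (df j) (af j)" using Paf j by blast
    then have "ev2 (Hpp l s e) (af j T) T = 0" using Tin unfolding P_def by blast
    then show "Qf l s (e + af j T * T) T = 0" by (simp add: Q_H)
  next
    fix j and T :: complex assume j: "j < mK l s e" and T: "T \<in> ball 0 \<delta>"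
    have Tin: "T \<in> ball 0 (df j)" using sub[OF j] T by blast
    have "P j (df j) (af j)" using Paf j by blast
    then show "af j T \<in> cball (ak l e (kj s e j)) (1/2)" using Tin unfolding P_def by blast
  qed
qed

lemma img_eq:
  "(\<lambda>(\<mu>, r). (r / \<mu>, 1 / \<mu>)) ` (Xi l s \<inter> {(\<mu>, r). \<mu> \<noteq> 0}) = {x. snd x \<noteq> 0 \<and> Qf l s (fst x) (snd x) = 0}"
proof
  show "(\<lambda>(\<mu>, r). (r / \<mu>, 1 / \<mu>)) ` (Xi l s \<inter> {(\<mu>, r). \<mu> \<noteq> 0}) \<subseteq> {x. snd x \<noteq> 0 \<and> Qf l s (fst x) (snd x) = 0}"
  proof
    fix x assume "x \<in> (\<lambda>(\<mu>, r). (r / \<mu>, 1 / \<mu>)) ` (Xi l s \<inter> {(\<mu>, r). \<mu> \<noteq> 0})"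
    then obtain \<mu> r where m: "\<mu> \<noteq> 0" "Xi_poly l s \<mu> r = 0" "x = (r/\<mu>, 1/\<mu>)"
      by (auto simp: Xi_def)
    then have "\<mu>^l * Qf l s (r/\<mu>) (1/\<mu>) = 0" by (simp add: Xi_scale)
    then show "x \<in> {x. snd x \<noteq> 0 \<and> Qf l s (fst x) (snd x) = 0}" using m by simp
  qed
next
  show "{x. snd x \<noteq> 0 \<and> Qf l s (fst x) (snd x) = 0} \<subseteq> (\<lambda>(\<mu>, r). (r / \<mu>, 1 / \<mu>)) ` (Xi l s \<inter> {(\<mu>, r). \<mu> \<noteq> 0})"
  proof
    fix x assume "x \<in> {x. snd x \<noteq> 0 \<and> Qf l s (fst x) (snd x) = 0}"
    then obtain R T where x: "x = (R, T)" "T \<noteq> 0" "Qf l s R T = 0" by (cases x) auto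
    have "Xi_poly l s (1/T) (R/T) = (1/T)^l * Qf l s ((R/T) / (1/T)) (1 / (1/T))"
      using x(2) by (intro Xi_scale) simp
    also have "\<dots> = 0" using x by simp
    finally have "(1/T, R/T) \<in> Xi l s \<inter> {(\<mu>, r). \<mu> \<noteq> 0}" using x(2) by (simp add: Xi_def)
    moreover have "x = (\<lambda>(\<mu>, r). (r / \<mu>, 1 / \<mu>)) (1/T, R/T)" using x by simp
    ultimately show "x \<in> (\<lambda>(\<mu>, r). (r / \<mu>, 1 / \<mu>)) ` (Xi l s \<inter> {(\<mu>, r). \<mu> \<noteq> 0})" by blast
  qed
qed

lemma C_sub:
  "Xi_closure_chart l s \<subseteq> {x. Qf l s (fst x) (snd x) = 0}"
  unfolding Xi_closure_chart_def img_eq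
  by (rule closure_minimal) (auto intro!: closed_Collect_eq Qf_cont continuous_on_const)

lemma neg_one_pow_cases: "(-1::complex)^i = 1 \<or> (-1::complex)^i = -1"
  by (cases "even i") auto


lemma small_prod:
  assumes "dist c a \<le> 1/2" "norm c \<le> real l" "norm (T::complex) < 1 / (2 * (real l + 1))"
  shows "norm (a * T) < 1/2"
proof -
  have "norm a \<le> norm c + norm (a - c)" by (metis add.commute diff_add_cancel norm_triangle_ineq)
  also have "norm (a - c) = dist c a" by (simp add: dist_norm norm_minus_commute)
  finally have na: "norm a \<le> real l + 1" using assms(1,2) by linarith
  have "norm (a * T) = norm a * norm T" by (simp add: norm_mult)
  also have "\<dots> \<le> (real l + 1) * norm T" by (intro mult_right_mono na) simp
  also have "\<dots> < (real l + 1) * (1 / (2 * (real l + 1)))"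
    by (intro mult_strict_left_mono assms(3)) simp
  also have "\<dots> = 1/2" by simp
  finally show ?thesis .
qed

lemma deriv_branch:
  assumes hol: "\<alpha> holomorphic_on ball 0 \<delta>" and d: "\<delta> > 0"
  shows "deriv (\<lambda>T. e + \<alpha> T * T) 0 = \<alpha> 0" "isCont (\<lambda>T. e + \<alpha> T * T) 0"
proof -
  have "\<alpha> field_differentiable (at 0)"
    using holomorphic_on_imp_differentiable_at[OF hol open_ball] d by simp
  then obtain D where D: "(\<alpha> has_field_derivative D) (at 0)" by (auto simp: field_differentiable_def)
  have "((\<lambda>T. e + \<alpha> T * T) has_field_derivative (0 + (D * 0 + 1 * \<alpha> 0))) (at 0)"
    by (intro DERIV_add DERIV_const DERIV_mult D DERIV_ident)
  then have dd: "((\<lambda>T. e + \<alpha> T * T) has_field_derivative \<alpha> 0) (at 0)" by simp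
  show "deriv (\<lambda>T. e + \<alpha> T * T) 0 = \<alpha> 0" by (rule DERIV_imp_deriv[OF dd])
  show "isCont (\<lambda>T. e + \<alpha> T * T) 0" by (rule DERIV_isCont[OF dd])
qed

lemma main:
  assumes s: "s \<in> {1,-1}" and e: "e \<in> {1,-1}"
  shows "transversal_branches_at_infinity (Xi_closure_chart l s) e (mK l s e)"
proof -
  have e': "-e \<in> {1,-1}" using e by auto
  have s2: "s * s = 1" using s by auto
  define m1 where "m1 = mK l s e"
  define m2 where "m2 = mK l s (-e)"
  obtain \<delta>1 \<alpha>1 where d1: "\<delta>1 > 0"
    and h1: "\<And>j. j < m1 \<Longrightarrow> \<alpha>1 j holomorphic_on ball 0 \<delta>1"
    and z1: "\<And>j. j < m1 \<Longrightarrow> \<alpha>1 j 0 = ak l e (kj s e j)"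
    and q1: "\<And>j T. j < m1 \<Longrightarrow> T \<in> ball 0 \<delta>1 \<Longrightarrow> Qf l s (e + \<alpha>1 j T * T) T = 0"
    and c1: "\<And>j T. j < m1 \<Longrightarrow> T \<in> ball 0 \<delta>1 \<Longrightarrow> \<alpha>1 j T \<in> cball (ak l e (kj s e j)) (1/2)"
    using branches[OF s e, of l] unfolding m1_def by metis
  obtain \<delta>2 \<alpha>2 where d2: "\<delta>2 > 0"
    and q2: "\<And>j T. j < m2 \<Longrightarrow> T \<in> ball 0 \<delta>2 \<Longrightarrow> Qf l s (-e + \<alpha>2 j T * T) T = 0"
    and c2: "\<And>j T. j < m2 \<Longrightarrow> T \<in> ball 0 \<delta>2 \<Longrightarrow> \<alpha>2 j T \<in> cball (ak l (-e) (kj s (-e) j)) (1/2)"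
    using branches[OF s e', of l] unfolding m2_def by metis
  define \<delta> where "\<delta> = min (min \<delta>1 \<delta>2) (1 / (2 * (real l + 1)))"
  have dpos: "\<delta> > 0" using d1 d2 by (simp add: \<delta>_def)
  have b1: "T \<in> ball 0 \<delta>1" and b2: "T \<in> ball 0 \<delta>2" and b3: "norm T < 1 / (2 * (real l + 1))"
    if "T \<in> ball 0 \<delta>" for T using that by (auto simp: \<delta>_def)
  define \<psi>1 where "\<psi>1 = (\<lambda>j T. e + \<alpha>1 j T * T)"
  define \<psi>2 where "\<psi>2 = (\<lambda>j T. -e + \<alpha>2 j T * T)"
  have small1: "norm (\<alpha>1 j T * T) < 1/2" if "j < m1" "T \<in> ball 0 \<delta>" for j T
  proof (rule small_prod[of "ak l e (kj s e j)" _ l])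
    show "dist (ak l e (kj s e j)) (\<alpha>1 j T) \<le> 1/2" using c1[OF that(1) b1[OF that(2)]] by simp
    show "norm (ak l e (kj s e j)) \<le> real l"
      using ak_bound[OF e kj_props(1)[OF s e]] that(1) by (simp add: m1_def)
    show "norm T < 1 / (2 * (real l + 1))" using b3[OF that(2)] .
  qed
  have small2: "norm (\<alpha>2 j T * T) < 1/2" if "j < m2" "T \<in> ball 0 \<delta>" for j T
  proof (rule small_prod[of "ak l (-e) (kj s (-e) j)" _ l])
    show "dist (ak l (-e) (kj s (-e) j)) (\<alpha>2 j T) \<le> 1/2" using c2[OF that(1) b2[OF that(2)]] by simp
    show "norm (ak l (-e) (kj s (-e) j)) \<le> real l"
      using ak_bound[OF e' kj_props(1)[OF s e']] that(1) by (simp add: m2_def)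
    show "norm T < 1 / (2 * (real l + 1))" using b3[OF that(2)] .
  qed
  have ne1: "\<alpha>1 j T \<noteq> \<alpha>1 j' T" if "j < m1" "j' < m1" "j \<noteq> j'" "T \<in> ball 0 \<delta>" for j j' T
  proof
    assume eq: "\<alpha>1 j T = \<alpha>1 j' T"
    have "dist (ak l e (kj s e j)) (\<alpha>1 j T) \<le> 1/2" using c1[OF that(1) b1[OF that(4)]] by simp
    moreover have "dist (ak l e (kj s e j')) (\<alpha>1 j' T) \<le> 1/2" using c1[OF that(2) b1[OF that(4)]] by simp
    ultimately have "dist (ak l e (kj s e j)) (ak l e (kj s e j')) \<le> 1"
      using eq dist_triangle3[of "ak l e (kj s e j)" "ak l e (kj s e j')" "\<alpha>1 j T"] by (simp add: dist_commute)
    moreover have "norm (ak l e (kj s e j) - ak l e (kj s e j')) \<ge> 2" by (rule ak_kj_dist[OF e that(3)])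
    ultimately show False by (simp add: dist_norm)
  qed
  have ne2: "\<alpha>2 j T \<noteq> \<alpha>2 j' T" if "j < m2" "j' < m2" "j \<noteq> j'" "T \<in> ball 0 \<delta>" for j j' T
  proof
    assume eq: "\<alpha>2 j T = \<alpha>2 j' T"
    have "dist (ak l (-e) (kj s (-e) j)) (\<alpha>2 j T) \<le> 1/2" using c2[OF that(1) b2[OF that(4)]] by simp
    moreover have "dist (ak l (-e) (kj s (-e) j')) (\<alpha>2 j' T) \<le> 1/2" using c2[OF that(2) b2[OF that(4)]] by simp
    ultimately have "dist (ak l (-e) (kj s (-e) j)) (ak l (-e) (kj s (-e) j')) \<le> 1"
      using eq dist_triangle3[of "ak l (-e) (kj s (-e) j)" "ak l (-e) (kj s (-e) j')" "\<alpha>2 j T"] by (simp add: dist_commute)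
    moreover have "norm (ak l (-e) (kj s (-e) j) - ak l (-e) (kj s (-e) j')) \<ge> 2" by (rule ak_kj_dist[OF e' that(3)])
    ultimately show False by (simp add: dist_norm)
  qed
  have norm_e: "norm e = 1" using e by auto
  have roots: "(\<exists>j<m1. R = \<psi>1 j T) \<or> (\<exists>j<m2. R = \<psi>2 j T)"
    if T: "T \<in> ball 0 \<delta>" "T \<noteq> 0" and R: "Qf l s R T = 0" for R T
  proof (rule ccontr)
    assume nR: "\<not> ((\<exists>j<m1. R = \<psi>1 j T) \<or> (\<exists>j<m2. R = \<psi>2 j T))"
    define S1 where "S1 = (\<lambda>j. \<psi>1 j T) ` {..<m1}"
    define S2 where "S2 = (\<lambda>j. \<psi>2 j T) ` {..<m2}"
    have inj1: "inj_on (\<lambda>j. \<psi>1 j T) {..<m1}"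
    proof (rule inj_onI)
      fix j j' assume "j \<in> {..<m1}" "j' \<in> {..<m1}" "\<psi>1 j T = \<psi>1 j' T"
      then show "j = j'" using ne1[of j j' T] T by (auto simp: \<psi>1_def)
    qed
    have inj2: "inj_on (\<lambda>j. \<psi>2 j T) {..<m2}"
    proof (rule inj_onI)
      fix j j' assume "j \<in> {..<m2}" "j' \<in> {..<m2}" "\<psi>2 j T = \<psi>2 j' T"
      then show "j = j'" using ne2[of j j' T] T by (auto simp: \<psi>2_def)
    qed
    have disj: "S1 \<inter> S2 = {}"
    proof (rule ccontr)
      assume "S1 \<inter> S2 \<noteq> {}"
      then obtain j j' where j: "j < m1" "j' < m2" "\<psi>1 j T = \<psi>2 j' T" by (auto simp: S1_def S2_def)
      then have "2 * e = \<alpha>2 j' T * T - \<alpha>1 j T * T" by (simp add: \<psi>1_def \<psi>2_def algebra_simps)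
      then have "norm (2 * e) \<le> norm (\<alpha>2 j' T * T) + norm (\<alpha>1 j T * T)"
        by (metis norm_triangle_ineq4)
      also have "\<dots> < 1" using small1[OF j(1) T(1)] small2[OF j(2) T(1)] by linarith
      finally show False using norm_e by (simp add: norm_mult)
    qed
    have cardS: "card (S1 \<union> S2) = l"
    proof -
      have "card (S1 \<union> S2) = card S1 + card S2" using disj by (intro card_Un_disjoint) (auto simp: S1_def S2_def)
      also have "\<dots> = m1 + m2" using inj1 inj2 by (simp add: S1_def S2_def card_image)
      also have "\<dots> = l" unfolding m1_def m2_def by (rule mK_sum[OF s e])
      finally show ?thesis .
    qed
    have sub: "insert R (S1 \<union> S2) \<subseteq> {R. Qf l s R T = 0}"
      using R q1 q2 b1[OF T(1)] b2[OF T(1)] by (auto simp: S1_def S2_def \<psi>1_def \<psi>2_def)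
    have "R \<notin> S1 \<union> S2" using nR by (auto simp: S1_def S2_def)
    then have "card (insert R (S1 \<union> S2)) = l + 1"
      using cardS by (subst card_insert_disjoint) (auto simp: S1_def S2_def)
    moreover have "card (insert R (S1 \<union> S2)) \<le> card {R. Qf l s R T = 0}"
      by (rule card_mono[OF Qf_roots(1)[OF s2] sub])
    moreover have "card {R. Qf l s R T = 0} \<le> l" by (rule Qf_roots(2)[OF s2])
    ultimately show False by simp
  qed
  define img where "img = (\<lambda>(\<mu>, r). (r / \<mu>, 1 / \<mu>)) ` (Xi l s \<inter> {(\<mu>, r). \<mu> \<noteq> 0})"
  have img: "img = {x. snd x \<noteq> 0 \<and> Qf l s (fst x) (snd x) = 0}" unfolding img_def by (rule img_eq)
  have C: "Xi_closure_chart l s = closure img" by (simp add: Xi_closure_chart_def img_def)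
  have Csub: "Xi_closure_chart l s \<subseteq> {x. Qf l s (fst x) (snd x) = 0}" by (rule C_sub)
  have hol1: "\<alpha>1 j holomorphic_on ball 0 \<delta>" if "j < m1" for j
    using h1[OF that] by (rule holomorphic_on_subset) (auto simp: \<delta>_def)
  have der: "deriv (\<psi>1 j) 0 = ak l e (kj s e j)" if "j < m1" for j
    using deriv_branch(1)[OF hol1[OF that] dpos, of e] z1[OF that] by (simp add: \<psi>1_def)
  have cont: "isCont (\<psi>1 j) 0" if "j < m1" for j
    using deriv_branch(2)[OF hol1[OF that] dpos, of e] by (simp add: \<psi>1_def)
  define U where "U = ball e (1/2) \<times> ball (0::complex) \<delta>"
  have setEq: "Xi_closure_chart l s \<inter> U = {(\<psi>1 j t, t) |j t. j < m1 \<and> t \<in> ball 0 \<delta>}"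
  proof
    show "Xi_closure_chart l s \<inter> U \<subseteq> {(\<psi>1 j t, t) |j t. j < m1 \<and> t \<in> ball 0 \<delta>}"
    proof
      fix x assume x: "x \<in> Xi_closure_chart l s \<inter> U"
      obtain R T where xRT: "x = (R, T)" by (cases x)
      have Q: "Qf l s R T = 0" using x Csub xRT by auto
      have RU: "dist e R < 1/2" and TU: "T \<in> ball 0 \<delta>" using x xRT by (auto simp: U_def)
      show "x \<in> {(\<psi>1 j t, t) |j t. j < m1 \<and> t \<in> ball 0 \<delta>}"
      proof (cases "T = 0")
        case False
        from roots[OF TU False Q] show ?thesis
        proof
          assume "\<exists>j<m1. R = \<psi>1 j T"
          then show ?thesis using xRT TU by blast
        next
          assume "\<exists>j<m2. R = \<psi>2 j T"
          then obtain j where j: "j < m2" "R = \<psi>2 j T" by blast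
          have "2 * e = (e - R) + \<alpha>2 j T * T" using j by (simp add: \<psi>2_def algebra_simps)
          then have "norm (2 * e) \<le> norm (e - R) + norm (\<alpha>2 j T * T)" by (metis norm_triangle_ineq)
          also have "\<dots> < 1" using RU small2[OF j(1) TU] by (simp add: dist_norm)
          finally have False using norm_e by (simp add: norm_mult)
          then show ?thesis ..
        qed
      next
        case True
        then have "(\<Prod>i<l. (-1)^i + s * R) = 0" using Q by (simp add: Qf_T0)
        then obtain i where i: "i < l" "(-1)^i + s * R = 0" by (auto simp: prod_zero_iff)
        have Rv: "R = - (s * (-1)^i)"
        proof -
          have "s * ((-1)^i + s * R) = 0" using i by simp
          then have "s * (-1)^i + (s * s) * R = 0" by (simp add: algebra_simps)
          then show ?thesis using s2 by (simp add: eq_neg_iff_add_eq_0 add.commute)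
        qed
        have "R = e"
        proof (rule ccontr)
          assume "R \<noteq> e"
          moreover have "R \<in> {1, -1}" using Rv s neg_one_pow_cases[of i] by auto
          ultimately have "R = -e" using e by auto
          then show False using RU norm_e by (simp add: dist_norm)
        qed
        then have "inK s e i" using i by (simp add: inK_def eq_neg_iff_add_eq_0)
        then have "i \<in> {i. i < l \<and> inK s e i}" using i by simp
        then obtain j where j: "j < m1" using K_set[OF s e] by (auto simp: m1_def)
        have "x = (\<psi>1 j 0, 0)" using xRT True \<open>R = e\<close> by (simp add: \<psi>1_def)
        then show ?thesis using j dpos by auto
      qed
    qed
  next
    show "{(\<psi>1 j t, t) |j t. j < m1 \<and> t \<in> ball 0 \<delta>} \<subseteq> Xi_closure_chart l s \<inter> U"
    proof
      fix x assume "x \<in> {(\<psi>1 j t, t) |j t. j < m1 \<and> t \<in> ball 0 \<delta>}"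
      then obtain j t where x: "x = (\<psi>1 j t, t)" and j: "j < m1" and t: "t \<in> ball 0 \<delta>" by blast
      have inU: "x \<in> U"
        using small1[OF j t] t x by (simp add: U_def \<psi>1_def dist_norm)
      have inImg: "(\<psi>1 j t', t') \<in> img" if "t' \<in> ball 0 \<delta>" "t' \<noteq> 0" for t'
        using q1[OF j b1[OF that(1)]] that by (simp add: img \<psi>1_def)
      have "x \<in> closure img"
      proof (cases "t = 0")
        case False
        then show ?thesis using inImg[OF t] x closure_subset by blast
      next
        case True
        have "(\<psi>1 j 0, 0) \<in> closure img"
        proof (rule Lim_in_closed_set[of _ "\<lambda>t. (\<psi>1 j t, t)" "at 0"])
          show "closed (closure img)" by simp
          have ev: "\<forall>\<^sub>F t in at (0::complex). t \<in> ball 0 \<delta> - {0}"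
            by (rule eventually_at_in_open) (use dpos in auto)
          show "\<forall>\<^sub>F t in at 0. (\<psi>1 j t, t) \<in> closure img"
            by (rule eventually_mono[OF ev]) (use inImg closure_subset in blast)
          show "at (0::complex) \<noteq> bot" by simp
          show "((\<lambda>t. (\<psi>1 j t, t)) \<longlongrightarrow> (\<psi>1 j 0, 0)) (at 0)"
            using cont[OF j] by (intro tendsto_Pair tendsto_ident_at) (simp add: isCont_def)
        qed
        then show ?thesis using x True by simp
      qed
      then show "x \<in> Xi_closure_chart l s \<inter> U" using inU C by simp
    qed
  qed
  show ?thesis
    unfolding transversal_branches_at_infinity_def m1_def[symmetric]
  proof (intro exI conjI)
    show "open U" by (simp add: U_def open_Times)
    show "(e, 0) \<in> U" using dpos by (simp add: U_def)
    show "\<delta> > 0" by (rule dpos)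
    show "\<forall>j<m1. \<psi>1 j holomorphic_on ball 0 \<delta> \<and> \<psi>1 j 0 = e"
      using hol1 by (auto simp: \<psi>1_def intro!: holomorphic_intros)
    show "\<forall>i<m1. \<forall>j<m1. i \<noteq> j \<longrightarrow> deriv (\<psi>1 i) 0 \<noteq> deriv (\<psi>1 j) 0"
    proof (intro allI impI)
      fix i j assume ij: "i < m1" "j < m1" "i \<noteq> j"
      have "norm (ak l e (kj s e i) - ak l e (kj s e j)) \<ge> 2" by (rule ak_kj_dist[OF e ij(3)])
      then show "deriv (\<psi>1 i) 0 \<noteq> deriv (\<psi>1 j) 0" using der[OF ij(1)] der[OF ij(2)] by auto
    qed
    show "Xi_closure_chart l s \<inter> U = {(\<psi>1 j t, t) |j t. j < m1 \<and> t \<in> ball 0 \<delta>}" by (rule setEq)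
  qed
qed


theorem proposition3p3:
  fixes l :: nat
  assumes "l \<ge> 1"
  shows "\<forall>s \<in> {1::complex, -1}. \<forall>e \<in> {1::complex, -1}.
           transversal_branches_at_infinity (Xi_closure_chart l s) e
             (if s = e then l div 2 else l - l div 2)"
proof (intro ballI)
  fix s e :: complex assume s: "s \<in> {1, -1}" and e: "e \<in> {1, -1}"
  show "transversal_branches_at_infinity (Xi_closure_chart l s) e (if s = e then l div 2 else l - l div 2)"
    using main[OF s e, of l] by (simp add: mK_def)
qed

end
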